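(* Let $\Bbbk$ be a field of characteristic $0$ and $A=\Bbbk\langle s,t\rangle$ over $B=\Bbbk$. Consider a double bracket on $A$ with $\{\!\{t,t\}\!\}=\lambda(t\otimes1-1\otimes t)+\mu(t^2\otimes1-1\otimes t^2)+\nu(t^2\otimes t-t\otimes t^2)$, $\{\!\{s,s\}\!\}=l(s\otimes1-1\otimes s)+m(s^2\otimes1-1\otimes s^2)+n(s^2\otimes s-s\otimes s^2)$, with $4(\mu^2-\lambda\nu)=1$, $4(m^2-ln)=1$, and $\{\!\{t,s\}\!\}=\alpha_0t^2\otimes1+\alpha_0'1\otimes t^2+\beta_0s^2\otimes1+\beta_0'1\otimes s^2+\gamma_0t\otimes t+\gamma_1s\otimes s+\alpha_1ts\otimes1+\alpha_1'st\otimes1+\alpha_2t\otimes s+\alpha_2's\otimes t+\alpha_31\otimes ts+\alpha_3'1\otimes st+\beta_1t\otimes1+\beta_1'1\otimes t+\beta_2s\otimes1+\beta_2'1\otimes s+\gamma1\otimes1$, all coefficients in $\Bbbk$. If this double bracket is quasi-Poisson, then it is isomorphic (as a double quasi-Poisson algebra) to one of the following: Case 1: for $\gamma_0,\gamma_1\in\Bbbk$, $\mu=\pm\frac12$, $\alpha\in\Bbbk$ with $\alpha^2=\frac14+\gamma_0\gamma_1$: $\{\!\{t,t\}\!\}=\mu(t^2\otimes1-1\otimes t^2)$, $\{\!\{s,s\}\!\}=\mu(s^2\otimes1-1\otimes s^2)$, $\{\!\{t,s\}\!\}=\gamma_0t\otimes t+\gamma_1s\otimes s+\mu(st\otimes1-1\otimes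 ts)+\alpha(t\otimes s+s\otimes t)$; Case 2: for $\gamma\in\Bbbk$, $\alpha,\mu=\pm\frac12$: $\{\!\{t,t\}\!\}=\mu(t^2\otimes1-1\otimes t^2)$, $\{\!\{s,s\}\!\}=-\mu(s^2\otimes1-1\otimes s^2)$, $\{\!\{t,s\}\!\}=\alpha(st\otimes1+1\otimes ts)+\mu(s\otimes t-t\otimes s)+\gamma1\otimes1$; Case 3: for $m,\mu=\pm\frac12$: $\{\!\{t,t\}\!\}=\mu(t^2\otimes1-1\otimes t^2)$, $\{\!\{s,s\}\!\}=m(s^2\otimes1-1\otimes s^2)$, $\{\!\{t,s\}\!\}=\mu(st\otimes1-t\otimes s+s\otimes t-1\otimes ts)$; Case 4: for $\alpha,m,\mu=\pm\frac12$: $\{\!\{t,t\}\!\}=\mu(t^2\otimes1-1\otimes t^2)$, $\{\!\{s,s\}\!\}=m(s^2\otimes1-1\otimes s^2)$, $\{\!\{t,s\}\!\}=\alpha(st\otimes1-t\otimes s-s\otimes t+1\otimes ts)$; Case 5: for $n\in\Bbbk^\times$, $\alpha,\mu=\pm\frac12$: $\{\!\{t,t\}\!\}=\mu(t^2\otimes1-1\otimes t^2)$, $\{\!\{s,s\}\!\}=\frac{-1}{4n}(s\otimes1-1\otimes s)+n(s^2\otimes s-s\otimes s^2)$, $\{\!\{t,s\}\!\}=\alpha(st\otimes1-t\otimes s-s\otimes t+1\otimes ts)$; Case 6: for $n\in\Bbbk^\times$, $\mu=\pm\frac12$: $\{\!\{t,t\}\!\}=\mu(t^2\otimes1-1\otimes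 t^2)$, $\{\!\{s,s\}\!\}=\frac{-1}{4n}(s\otimes1-1\otimes s)+n(s^2\otimes s-s\otimes s^2)$, $\{\!\{t,s\}\!\}=\mu(st\otimes1-t\otimes s+s\otimes t-1\otimes ts)$; Case 7: for $n,\nu\in\Bbbk^\times$, $\alpha=\pm\frac12$: $\{\!\{t,t\}\!\}=\frac{-1}{4\nu}(t\otimes1-1\otimes t)+\nu(t^2\otimes t-t\otimes t^2)$, $\{\!\{s,s\}\!\}=\frac{-1}{4n}(s\otimes1-1\otimes s)+n(s^2\otimes s-s\otimes s^2)$, $\{\!\{t,s\}\!\}=\alpha(st\otimes1-t\otimes s-s\otimes t+1\otimes ts)$.
   Context: $\otimes=\otimes_\Bbbk$; Sweedler notation $d=d'\otimes d''$; outer structure $x(d'\otimes d'')y=xd'\otimes d''y$. A double bracket on $A$ is a $\Bbbk$-bilinear map $A\times A\to A\otimes A$ with $\{\!\{a,b\}\!\}=-\{\!\{b,a\}\!\}''\otimes\{\!\{b,a\}\!\}'$ and $\{\!\{a,bc\}\!\}=\{\!\{a,b\}\!\}c+b\{\!\{a,c\}\!\}$; it is determined by its values on $s,t$. Triple bracket: $\{\!\{a,b,c\}\!\}=\{\!\{a,\{\!\{b,c\}\!\}'\}\!\}\otimes\{\!\{b,c\}\!\}''+\tau\{\!\{b,\{\!\{c,a\}\!\}'\}\!\}\otimes\{\!\{c,a\}\!\}''+\tau^2\{\!\{c,\{\!\{a,b\}\!\}'\}\!\}\otimes\{\!\{a,b\}\!\}''$, $\tau(x_1\otimes x_2\otimes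 x_3)=x_3\otimes x_1\otimes x_2$. Quasi-Poisson (over $B=\Bbbk$): $\{\!\{a,b,c\}\!\}=\frac14(ca\otimes b\otimes1-ca\otimes1\otimes b-c\otimes ab\otimes1+c\otimes a\otimes b-a\otimes b\otimes c+a\otimes1\otimes bc+1\otimes ab\otimes c-1\otimes a\otimes bc)$ for all $a,b,c$. Two double quasi-Poisson algebras $(A,\{\!\{\}\!\})$, $(A,\{\!\{\}\!\}')$ over $\Bbbk$ are isomorphic if there is a $\Bbbk$-algebra isomorphism $\psi:A\to A$ with $(\psi\otimes\psi)\{\!\{a,b\}\!\}=\{\!\{\psi(a),\psi(b)\}\!\}'$ for all $a,b$. *)

theory Defs
  imports Main
begin

text \<open>The free algebra k<s,t> is modelled as finitely supported functions from
words over the alphabet {S,T} to the field; A (x) A and A (x) A (x) A as finitely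
supported functions on pairs / triples of words (coefficients w.r.t. the
monomial basis).\<close>

datatype gen = S | T

type_synonym 'k nc = "gen list \<Rightarrow> 'k"
type_synonym 'k nc2 = "gen list \<times> gen list \<Rightarrow> 'k"
type_synonym 'k nc3 = "gen list \<times> gen list \<times> gen list \<Rightarrow> 'k"

definition fin_supp :: "('a \<Rightarrow> 'k::zero) \<Rightarrow> bool" where
  "fin_supp f \<longleftrightarrow> finite {x. f x \<noteq> 0}"

definition ncA :: "'k::zero nc set" where
  "ncA = {p. fin_supp p}"

definition ncadd :: "('a \<Rightarrow> 'k::plus) \<Rightarrow> ('a \<Rightarrow> 'k) \<Rightarrow> 'a \<Rightarrow> 'k" where
  "ncadd p q = (\<lambda>w. p w + q w)"

definition ncsmult :: "'k::times \<Rightarrow> ('a \<Rightarrow> 'k) \<Rightarrow> 'a \<Rightarrow> 'k" where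
  "ncsmult c p = (\<lambda>w. c * p w)"

definition ncneg :: "('a \<Rightarrow> 'k::uminus) \<Rightarrow> 'a \<Rightarrow> 'k" where
  "ncneg p = (\<lambda>w. - p w)"

definition ncmul :: "'k::comm_ring_1 nc \<Rightarrow> 'k nc \<Rightarrow> 'k nc" where
  "ncmul p q = (\<lambda>w. \<Sum>i\<in>{0..length w}. p (take i w) * q (drop i w))"

definition ncone :: "'k::comm_ring_1 nc" where
  "ncone = (\<lambda>w. if w = [] then 1 else 0)"

definition mono :: "gen list \<Rightarrow> 'k::comm_ring_1 nc" where
  "mono u = (\<lambda>w. if w = u then 1 else 0)"

definition ncgen :: "gen \<Rightarrow> 'k::comm_ring_1 nc" where
  "ncgen g = mono [g]"

definition tens2 :: "'k::comm_ring_1 nc \<Rightarrow> 'k nc \<Rightarrow> 'k nc2" where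
  "tens2 x y = (\<lambda>(u, v). x u * y v)"

definition tens3 :: "'k::comm_ring_1 nc \<Rightarrow> 'k nc \<Rightarrow> 'k nc \<Rightarrow> 'k nc3" where
  "tens3 x y z = (\<lambda>(u, v, w). x u * y v * z w)"

text \<open>outer bimodule structure: x (d' (x) d'') = x d' (x) d'',  (d' (x) d'') y = d' (x) d'' y\<close>
definition lmul2 :: "'k::comm_ring_1 nc \<Rightarrow> 'k nc2 \<Rightarrow> 'k nc2" where
  "lmul2 x d = (\<lambda>(u, v). \<Sum>i\<in>{0..length u}. x (take i u) * d (drop i u, v))"

definition rmul2 :: "'k::comm_ring_1 nc2 \<Rightarrow> 'k nc \<Rightarrow> 'k nc2" where
  "rmul2 d y = (\<lambda>(u, v). \<Sum>j\<in>{0..length v}. d (u, take j v) * y (drop j v))"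

definition swap2 :: "'k nc2 \<Rightarrow> 'k nc2" where
  "swap2 d = (\<lambda>(u, v). d (v, u))"

definition is_double_bracket ::
  "('k::field nc \<Rightarrow> 'k nc \<Rightarrow> 'k nc2) \<Rightarrow> bool" where
  "is_double_bracket br \<longleftrightarrow>
     (\<forall>a\<in>ncA. \<forall>b\<in>ncA. fin_supp (br a b)) \<and>
     (\<forall>a\<in>ncA. \<forall>b\<in>ncA. \<forall>c\<in>ncA. br (ncadd a b) c = ncadd (br a c) (br b c)) \<and>
     (\<forall>a\<in>ncA. \<forall>b\<in>ncA. \<forall>c\<in>ncA. br a (ncadd b c) = ncadd (br a b) (br a c)) \<and>
     (\<forall>x. \<forall>a\<in>ncA. \<forall>b\<in>ncA. br (ncsmult x a) b = ncsmult x (br a b)) \<and>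
     (\<forall>x. \<forall>a\<in>ncA. \<forall>b\<in>ncA. br a (ncsmult x b) = ncsmult x (br a b)) \<and>
     (\<forall>a\<in>ncA. \<forall>b\<in>ncA. br a b = ncneg (swap2 (br b a))) \<and>
     (\<forall>a\<in>ncA. \<forall>b\<in>ncA. \<forall>c\<in>ncA.
        br a (ncmul b c) = ncadd (rmul2 (br a b) c) (lmul2 b (br a c)))"

text \<open>{{a, d'}} (x) d'' for d in A (x) A (expanding d in the monomial basis)\<close>
definition brL :: "('k::field nc \<Rightarrow> 'k nc \<Rightarrow> 'k nc2) \<Rightarrow> 'k nc \<Rightarrow> 'k nc2 \<Rightarrow> 'k nc3" where
  "brL br a d = (\<lambda>(x, y, z). \<Sum>p\<in>{p. d p \<noteq> 0}.
       d p * br a (mono (fst p)) (x, y) * (if snd p = z then 1 else 0))"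

text \<open>tau (x1 (x) x2 (x) x3) = x3 (x) x1 (x) x2\<close>
definition tau3 :: "'k nc3 \<Rightarrow> 'k nc3" where
  "tau3 D = (\<lambda>(x, y, z). D (y, z, x))"

definition triple_bracket ::
  "('k::field nc \<Rightarrow> 'k nc \<Rightarrow> 'k nc2) \<Rightarrow> 'k nc \<Rightarrow> 'k nc \<Rightarrow> 'k nc \<Rightarrow> 'k nc3" where
  "triple_bracket br a b c =
     ncadd (brL br a (br b c))
       (ncadd (tau3 (brL br b (br c a))) (tau3 (tau3 (brL br c (br a b)))))"

definition qp_rhs :: "'k::field nc \<Rightarrow> 'k nc \<Rightarrow> 'k nc \<Rightarrow> 'k nc3" where
  "qp_rhs a b c = (\<lambda>p. (1/4) *
     (  tens3 (ncmul c a) b ncone p - tens3 (ncmul c a) ncone b p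
      - tens3 c (ncmul a b) ncone p + tens3 c a b p
      - tens3 a b c p + tens3 a ncone (ncmul b c) p
      + tens3 ncone (ncmul a b) c p - tens3 ncone a (ncmul b c) p))"

definition quasi_poisson :: "('k::field nc \<Rightarrow> 'k nc \<Rightarrow> 'k nc2) \<Rightarrow> bool" where
  "quasi_poisson br \<longleftrightarrow>
     (\<forall>a\<in>ncA. \<forall>b\<in>ncA. \<forall>c\<in>ncA. triple_bracket br a b c = qp_rhs a b c)"

definition is_alg_aut :: "('k::field nc \<Rightarrow> 'k nc) \<Rightarrow> bool" where
  "is_alg_aut \<psi> \<longleftrightarrow> bij_betw \<psi> ncA ncA \<and>
     (\<forall>p\<in>ncA. \<forall>q\<in>ncA. \<psi> (ncadd p q) = ncadd (\<psi> p) (\<psi> q)) \<and>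
     (\<forall>c. \<forall>p\<in>ncA. \<psi> (ncsmult c p) = ncsmult c (\<psi> p)) \<and>
     (\<forall>p\<in>ncA. \<forall>q\<in>ncA. \<psi> (ncmul p q) = ncmul (\<psi> p) (\<psi> q)) \<and>
     \<psi> ncone = ncone"

text \<open>psi (x) psi on A (x) A\<close>
definition tmap2 :: "('k::field nc \<Rightarrow> 'k nc) \<Rightarrow> 'k nc2 \<Rightarrow> 'k nc2" where
  "tmap2 \<psi> d = (\<lambda>(u, v). \<Sum>p\<in>{p. d p \<noteq> 0}.
      d p * \<psi> (mono (fst p)) u * \<psi> (mono (snd p)) v)"

definition isomorphic_dqp ::
  "('k::field nc \<Rightarrow> 'k nc \<Rightarrow> 'k nc2) \<Rightarrow> ('k nc \<Rightarrow> 'k nc \<Rightarrow> 'k nc2) \<Rightarrow> bool" where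
  "isomorphic_dqp br br' \<longleftrightarrow> (\<exists>\<psi>. is_alg_aut \<psi> \<and>
      (\<forall>a\<in>ncA. \<forall>b\<in>ncA. tmap2 \<psi> (br a b) = br' (\<psi> a) (\<psi> b)))"

text \<open>linear combination  sum c * (u (x) v)  of monomial tensors\<close>
definition lc :: "('k::comm_ring_1 \<times> gen list \<times> gen list) list \<Rightarrow> 'k nc2" where
  "lc L = (\<lambda>p. sum_list (map (\<lambda>(c, u, v). if (u, v) = p then c else 0) L))"

abbreviation "tgen \<equiv> ncgen T"
abbreviation "sgen \<equiv> ncgen S"

definition pm_half :: "'k::field \<Rightarrow> bool" where
  "pm_half x \<longleftrightarrow> x = 1/2 \<or> x = -(1/2)"

definition TT_quad :: "'k::field \<Rightarrow> 'k nc2" where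
  "TT_quad \<mu> = lc [(\<mu>, [T,T], []), (-\<mu>, [], [T,T])]"

definition SS_quad :: "'k::field \<Rightarrow> 'k nc2" where
  "SS_quad m = lc [(m, [S,S], []), (-m, [], [S,S])]"

definition SS_cub :: "'k::field \<Rightarrow> 'k nc2" where
  "SS_cub n = lc [(-1/(4*n), [S], []), (1/(4*n), [], [S]),
                  (n, [S,S], [S]), (-n, [S], [S,S])]"

definition TT_cub :: "'k::field \<Rightarrow> 'k nc2" where
  "TT_cub \<nu> = lc [(-1/(4*\<nu>), [T], []), (1/(4*\<nu>), [], [T]),
                  (\<nu>, [T,T], [T]), (-\<nu>, [T], [T,T])]"

definition TS_A :: "'k::field \<Rightarrow> 'k nc2" where
  "TS_A c = lc [(c, [S,T], []), (-c, [T], [S]), (c, [S], [T]), (-c, [], [T,S])]"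

definition TS_B :: "'k::field \<Rightarrow> 'k nc2" where
  "TS_B c = lc [(c, [S,T], []), (-c, [T], [S]), (-c, [S], [T]), (c, [], [T,S])]"

definition normal_form :: "'k::field nc2 \<Rightarrow> 'k nc2 \<Rightarrow> 'k nc2 \<Rightarrow> bool" where
  "normal_form Btt Bss Bts \<longleftrightarrow>
    \<comment> \<open>Case 1\<close>
    (\<exists>\<gamma>0 \<gamma>1 \<mu> \<alpha>. pm_half \<mu> \<and> \<alpha>^2 = 1/4 + \<gamma>0 * \<gamma>1 \<and>
       Btt = TT_quad \<mu> \<and> Bss = SS_quad \<mu> \<and>
       Bts = lc [(\<gamma>0, [T], [T]), (\<gamma>1, [S], [S]), (\<mu>, [S,T], []), (-\<mu>, [], [T,S]),
                 (\<alpha>, [T], [S]), (\<alpha>, [S], [T])]) \<or>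
    \<comment> \<open>Case 2\<close>
    (\<exists>\<gamma> \<alpha> \<mu>. pm_half \<alpha> \<and> pm_half \<mu> \<and>
       Btt = TT_quad \<mu> \<and> Bss = SS_quad (-\<mu>) \<and>
       Bts = lc [(\<alpha>, [S,T], []), (\<alpha>, [], [T,S]), (\<mu>, [S], [T]), (-\<mu>, [T], [S]),
                 (\<gamma>, [], [])]) \<or>
    \<comment> \<open>Case 3\<close>
    (\<exists>m \<mu>. pm_half m \<and> pm_half \<mu> \<and>
       Btt = TT_quad \<mu> \<and> Bss = SS_quad m \<and> Bts = TS_A \<mu>) \<or>
    \<comment> \<open>Case 4\<close>
    (\<exists>\<alpha> m \<mu>. pm_half \<alpha> \<and> pm_half m \<and> pm_half \<mu> \<and>
       Btt = TT_quad \<mu> \<and> Bss = SS_quad m \<and> Bts = TS_B \<alpha>) \<or>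
    \<comment> \<open>Case 5\<close>
    (\<exists>n \<alpha> \<mu>. n \<noteq> 0 \<and> pm_half \<alpha> \<and> pm_half \<mu> \<and>
       Btt = TT_quad \<mu> \<and> Bss = SS_cub n \<and> Bts = TS_B \<alpha>) \<or>
    \<comment> \<open>Case 6\<close>
    (\<exists>n \<mu>. n \<noteq> 0 \<and> pm_half \<mu> \<and>
       Btt = TT_quad \<mu> \<and> Bss = SS_cub n \<and> Bts = TS_A \<mu>) \<or>
    \<comment> \<open>Case 7\<close>
    (\<exists>n \<nu> \<alpha>. n \<noteq> 0 \<and> \<nu> \<noteq> 0 \<and> pm_half \<alpha> \<and>
       Btt = TT_cub \<nu> \<and> Bss = SS_cub n \<and> Bts = TS_B \<alpha>)"

end

theory Submission
  imports Defs
begin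

lemma ncone_mono: "ncone = mono []"
  by (auto simp: ncone_def mono_def)

lemma ncgen_mono: "ncgen g = mono [g]"
  by (simp add: ncgen_def)

lemma mono_ncA[simp]: "mono u \<in> ncA"
  by (simp add: ncA_def fin_supp_def mono_def)

lemma ncone_ncA[simp]: "ncone \<in> ncA"
  by (simp add: ncone_mono)

lemma take_drop_split_iff:
  assumes "i \<le> length w"
  shows "(take i w = u \<and> drop i w = v) \<longleftrightarrow> (w = u @ v \<and> i = length u)"
  using assms by (auto simp: min_def)

lemma sum_split_delta:
  "(\<Sum>i\<in>{0..length w}. (if take i w = u \<and> drop i w = v then c else 0)) =
   (if w = u @ v then c else 0)"
proof -
  have "(\<Sum>i\<in>{0..length w}. (if take i w = u \<and> drop i w = v then c else 0)) =
        (\<Sum>i\<in>{0..length w}. (if i = length u then (if w = u @ v then c else 0) else 0))"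
    by (rule sum.cong) (auto simp: take_drop_split_iff)
  also have "\<dots> = (if w = u @ v then c else 0)"
    by (auto simp: sum.delta)
  finally show ?thesis .
qed

lemma ncmul_mono: "ncmul (mono u) (mono v) = (mono (u @ v) :: 'k::comm_ring_1 nc)"
proof
  fix w
  have "ncmul (mono u) (mono v) w =
        (\<Sum>i\<in>{0..length w}. (if take i w = u \<and> drop i w = v then (1::'k) else 0))"
    unfolding ncmul_def mono_def by (intro sum.cong) auto
  also have "\<dots> = mono (u @ v) w" by (simp add: sum_split_delta mono_def)
  finally show "ncmul (mono u) (mono v) w = (mono (u @ v) w :: 'k)" .
qed

lemma sum_mono_delta: "finite X \<Longrightarrow> (\<Sum>u\<in>X. c u * mono u w) = (if w \<in> X then c w else 0)"
  by (simp add: mono_def sum.delta' if_distrib cong: if_cong)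

lemma ncA_expand:
  assumes "p \<in> ncA" "finite X" "{x. p x \<noteq> 0} \<subseteq> X"
  shows "p = (\<lambda>w. \<Sum>u\<in>X. p u * mono u w)"
proof
  fix w show "p w = (\<Sum>u\<in>X. p u * mono u w)"
    using assms by (auto simp: sum_mono_delta)
qed

lemma ncA_finite: "p \<in> ncA \<Longrightarrow> finite {x. p x \<noteq> 0}"
  by (simp add: ncA_def fin_supp_def)

lemma combo_supp:
  "{w. (\<Sum>i\<in>I. c i * A i w :: 'k::comm_ring_1) \<noteq> 0} \<subseteq> (\<Union>i\<in>I. {w. A i w \<noteq> 0})"
proof (rule subsetI, rule ccontr)
  fix w assume a: "w \<in> {w. (\<Sum>i\<in>I. c i * A i w) \<noteq> 0}" and b: "w \<notin> (\<Union>i\<in>I. {w. A i w \<noteq> 0})"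
  from b have "\<forall>i\<in>I. A i w = 0" by blast
  hence "(\<Sum>i\<in>I. c i * A i w) = 0" by simp
  with a show False by simp
qed

lemma combo_fin_supp:
  assumes "finite I" "\<And>i. i \<in> I \<Longrightarrow> fin_supp (A i)"
  shows "fin_supp (\<lambda>w. \<Sum>i\<in>I. c i * A i w :: 'k::comm_ring_1)"
  unfolding fin_supp_def
  by (rule finite_subset[OF combo_supp]) (use assms in \<open>auto simp: fin_supp_def\<close>)

lemma combo_ncA:
  assumes "finite I" "\<And>i. i \<in> I \<Longrightarrow> A i \<in> ncA"
  shows "(\<lambda>w. \<Sum>i\<in>I. c i * A i w :: 'k::comm_ring_1) \<in> ncA"
  using combo_fin_supp[of I A c] assms by (simp add: ncA_def)

lemma ncmul_sum_left:
  "finite I \<Longrightarrow> ncmul (\<lambda>w. \<Sum>i\<in>I. c i * A i w) q = (\<lambda>w. \<Sum>i\<in>I. c i * ncmul (A i) q w)"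
  unfolding ncmul_def
  by (rule ext) (simp add: sum_distrib_right sum_distrib_left mult.assoc, rule sum.swap)

lemma ncmul_sum_right:
  "finite I \<Longrightarrow> ncmul p (\<lambda>w. \<Sum>i\<in>I. c i * A i w) = (\<lambda>w. \<Sum>i\<in>I. c i * ncmul p (A i) w)"
  unfolding ncmul_def
  by (rule ext) (simp add: sum_distrib_right sum_distrib_left mult.assoc mult.left_commute sum.swap[where A=I])


abbreviation spt :: "('a \<Rightarrow> 'k::zero) \<Rightarrow> 'a set" where "spt f \<equiv> {x. f x \<noteq> 0}"

lemma ncA_expand': "p \<in> ncA \<Longrightarrow> p = (\<lambda>w. \<Sum>u\<in>spt p. p u * mono u w)"
  by (rule ncA_expand) (auto simp: ncA_finite)

lemma ncmul_mono_left:
  assumes "r \<in> ncA"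
  shows "ncmul (mono m) r = (\<lambda>w. \<Sum>z\<in>spt r. r z * mono (m @ z) w)"
proof -
  have "ncmul (mono m) r = ncmul (mono m) (\<lambda>w. \<Sum>z\<in>spt r. r z * mono z w)"
    using ncA_expand'[OF assms] by metis
  also have "\<dots> = (\<lambda>w. \<Sum>z\<in>spt r. r z * mono (m @ z) w)"
    using assms by (simp add: ncmul_sum_right ncA_finite ncmul_mono)
  finally show ?thesis .
qed

lemma ncmul_mono_right:
  assumes "p \<in> ncA"
  shows "ncmul p (mono m) = (\<lambda>w. \<Sum>u\<in>spt p. p u * mono (u @ m) w)"
proof -
  have "ncmul p (mono m) = ncmul (\<lambda>w. \<Sum>u\<in>spt p. p u * mono u w) (mono m)"
    using ncA_expand'[OF assms] by metis
  also have "\<dots> = (\<lambda>w. \<Sum>u\<in>spt p. p u * mono (u @ m) w)"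
    using assms by (simp add: ncmul_sum_left ncA_finite ncmul_mono)
  finally show ?thesis .
qed

lemma ncmul_expand:
  assumes "p \<in> ncA" "q \<in> ncA"
  shows "ncmul p q = (\<lambda>w. \<Sum>u\<in>spt p. p u * (\<Sum>v\<in>spt q. q v * mono (u @ v) w))"
proof -
  have "ncmul p q = ncmul (\<lambda>w. \<Sum>u\<in>spt p. p u * mono u w) q"
    using ncA_expand'[OF assms(1)] by metis
  also have "\<dots> = (\<lambda>w. \<Sum>u\<in>spt p. p u * ncmul (mono u) q w)"
    using assms by (simp add: ncmul_sum_left ncA_finite)
  also have "\<dots> = (\<lambda>w. \<Sum>u\<in>spt p. p u * (\<Sum>v\<in>spt q. q v * mono (u @ v) w))"
    using assms by (simp add: ncmul_mono_left)
  finally show ?thesis .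
qed

lemma ncmul_ncA[simp]:
  assumes "p \<in> ncA" "q \<in> ncA"
  shows "ncmul p q \<in> ncA"
  unfolding ncmul_expand[OF assms]
  by (rule combo_ncA) (use assms in \<open>auto simp: ncA_finite intro!: combo_ncA\<close>)

lemma ncmul_one_left: assumes "p \<in> ncA" shows "ncmul ncone p = p"
proof -
  have "ncmul ncone p = (\<lambda>w. \<Sum>z\<in>spt p. p z * mono z w)"
    using ncmul_mono_left[OF assms, of "[]"] by (simp add: ncone_mono)
  thus ?thesis by (rule trans[OF _ sym[OF ncA_expand'[OF assms]]])
qed

lemma ncmul_one_right: assumes "p \<in> ncA" shows "ncmul p ncone = p"
proof -
  have "ncmul p ncone = (\<lambda>w. \<Sum>z\<in>spt p. p z * mono z w)"
    using ncmul_mono_right[OF assms, of "[]"] by (simp add: ncone_mono)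
  thus ?thesis by (rule trans[OF _ sym[OF ncA_expand'[OF assms]]])
qed

lemma ncmul_assoc:
  assumes p: "p \<in> ncA" and q: "q \<in> ncA" and r: "r \<in> ncA"
  shows "ncmul (ncmul p q) r = ncmul p (ncmul q r)"
proof -
  have fp: "finite (spt p)" and fq: "finite (spt q)" and fr: "finite (spt r)"
    using p q r by (auto simp: ncA_finite)
  have "ncmul (ncmul p q) r =
        (\<lambda>w. \<Sum>u\<in>spt p. p u * ncmul (\<lambda>w. \<Sum>v\<in>spt q. q v * mono (u @ v) w) r w)"
    by (simp add: ncmul_expand[OF p q] ncmul_sum_left fp)
  also have "\<dots> = (\<lambda>w. \<Sum>u\<in>spt p. p u * (\<Sum>v\<in>spt q. q v * (\<Sum>z\<in>spt r. r z * mono (u @ v @ z) w)))"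
    by (simp add: ncmul_sum_left fq ncmul_mono_left[OF r])
  finally have L: "ncmul (ncmul p q) r = \<dots>" .
  have "ncmul p (ncmul q r) =
        (\<lambda>w. \<Sum>v\<in>spt q. q v * ncmul p (\<lambda>w. \<Sum>z\<in>spt r. r z * mono (v @ z) w) w)"
    by (simp add: ncmul_expand[OF q r] ncmul_sum_right fq)
  also have "\<dots> = (\<lambda>w. \<Sum>v\<in>spt q. q v * (\<Sum>z\<in>spt r. r z * (\<Sum>u\<in>spt p. p u * mono (u @ v @ z) w)))"
    by (simp add: ncmul_sum_right fr ncmul_mono_right[OF p])
  finally have R: "ncmul p (ncmul q r) = \<dots>" .
  show ?thesis unfolding L R
  proof (rule ext)
    fix w
    have "(\<Sum>u\<in>spt p. p u * (\<Sum>v\<in>spt q. q v * (\<Sum>z\<in>spt r. r z * mono (u @ v @ z) w))) =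
          (\<Sum>u\<in>spt p. \<Sum>v\<in>spt q. \<Sum>z\<in>spt r. p u * q v * r z * mono (u @ v @ z) w)"
      by (simp add: sum_distrib_left mult.assoc)
    also have "\<dots> = (\<Sum>v\<in>spt q. \<Sum>z\<in>spt r. \<Sum>u\<in>spt p. p u * q v * r z * mono (u @ v @ z) w)"
      by (subst sum.swap) (subst (2) sum.swap, rule refl)
    also have "\<dots> = (\<Sum>v\<in>spt q. q v * (\<Sum>z\<in>spt r. r z * (\<Sum>u\<in>spt p. p u * mono (u @ v @ z) w)))"
      by (simp add: sum_distrib_left mult_ac)
    finally show "(\<Sum>u\<in>spt p. p u * (\<Sum>v\<in>spt q. q v * (\<Sum>z\<in>spt r. r z * mono (u @ v @ z) w))) =
          (\<Sum>v\<in>spt q. q v * (\<Sum>z\<in>spt r. r z * (\<Sum>u\<in>spt p. p u * mono (u @ v @ z) w)))" .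
  qed
qed

fun wimg :: "(gen \<Rightarrow> 'k::comm_ring_1 nc) \<Rightarrow> gen list \<Rightarrow> 'k nc" where
  "wimg f [] = ncone"
| "wimg f (g # u) = ncmul (f g) (wimg f u)"

definition subst :: "(gen \<Rightarrow> 'k::comm_ring_1 nc) \<Rightarrow> 'k nc \<Rightarrow> 'k nc" where
  "subst f p = (\<lambda>w. \<Sum>u\<in>spt p. p u * wimg f u w)"

definition gens_ok :: "(gen \<Rightarrow> 'k::comm_ring_1 nc) \<Rightarrow> bool" where
  "gens_ok f \<longleftrightarrow> (\<forall>g. f g \<in> ncA)"

lemma wimg_ncA[simp]: "gens_ok f \<Longrightarrow> wimg f u \<in> ncA"
  by (induction u) (auto simp: gens_ok_def)

lemma wimg_append: "gens_ok f \<Longrightarrow> wimg f (u @ v) = ncmul (wimg f u) (wimg f v)"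
  by (induction u) (auto simp: ncmul_one_left ncmul_assoc gens_ok_def)

lemma subst_superset:
  "p \<in> ncA \<Longrightarrow> finite X \<Longrightarrow> spt p \<subseteq> X \<Longrightarrow> subst f p = (\<lambda>w. \<Sum>u\<in>X. p u * wimg f u w)"
  unfolding subst_def by (rule ext, rule sum.mono_neutral_left) auto

lemma subst_ncA[simp]: "gens_ok f \<Longrightarrow> p \<in> ncA \<Longrightarrow> subst f p \<in> ncA"
  unfolding subst_def by (rule combo_ncA) (auto simp: ncA_finite)

lemma combo_ncA_sum_swap:
  "finite I \<Longrightarrow> finite U \<Longrightarrow>
   (\<Sum>u\<in>U. (\<Sum>i\<in>I. c i * A i u) * W u :: 'k::comm_ring_1) = (\<Sum>i\<in>I. c i * (\<Sum>u\<in>U. A i u * W u))"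
  by (simp add: sum_distrib_right sum_distrib_left mult.assoc) (rule sum.swap)

lemma subst_lin:
  assumes I: "finite I" and A: "\<And>i. i \<in> I \<Longrightarrow> A i \<in> ncA"
  shows "subst f (\<lambda>w. \<Sum>i\<in>I. c i * A i w) = (\<lambda>w. \<Sum>i\<in>I. c i * subst f (A i) w)"
proof -
  define U where "U = (\<Union>i\<in>I. spt (A i))"
  have U: "finite U" using I A by (auto simp: U_def ncA_finite)
  have "subst f (\<lambda>w. \<Sum>i\<in>I. c i * A i w) = (\<lambda>w. \<Sum>u\<in>U. (\<Sum>i\<in>I. c i * A i u) * wimg f u w)"
    by (rule subst_superset) (use I A U combo_supp[of c A I] in \<open>auto simp: U_def intro: combo_ncA\<close>)
  also have "\<dots> = (\<lambda>w. \<Sum>i\<in>I. c i * (\<Sum>u\<in>U. A i u * wimg f u w))"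
    by (simp add: combo_ncA_sum_swap I U)
  also have "\<dots> = (\<lambda>w. \<Sum>i\<in>I. c i * subst f (A i) w)"
  proof (rule ext, rule sum.cong[OF refl])
    fix w i assume "i \<in> I"
    hence "subst f (A i) = (\<lambda>w. \<Sum>u\<in>U. A i u * wimg f u w)"
      by (intro subst_superset A U) (auto simp: U_def)
    thus "c i * (\<Sum>u\<in>U. A i u * wimg f u w) = c i * subst f (A i) w" by simp
  qed
  finally show ?thesis .
qed

lemma spt_mono: "spt (mono u :: 'k::comm_ring_1 nc) = {u}"
  by (auto simp: mono_def)

lemma subst_mono[simp]: "subst f (mono u) = wimg f u"
  by (simp add: subst_def spt_mono mono_def)

lemma subst_one[simp]: "subst f ncone = ncone"
  by (simp add: ncone_mono)

lemma subst_mul: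
  assumes f: "gens_ok f" and p: "p \<in> ncA" and q: "q \<in> ncA"
  shows "subst f (ncmul p q) = ncmul (subst f p) (subst f q)"
proof -
  have fp: "finite (spt p)" and fq: "finite (spt q)" using p q by (auto simp: ncA_finite)
  have "subst f (ncmul p q) = (\<lambda>w. \<Sum>u\<in>spt p. p u * subst f (\<lambda>w. \<Sum>v\<in>spt q. q v * mono (u @ v) w) w)"
    unfolding ncmul_expand[OF p q]
    by (rule subst_lin[where A="\<lambda>u w. \<Sum>v\<in>spt q. q v * mono (u @ v) w"]) (auto simp: fp fq intro!: combo_ncA)
  also have "\<dots> = (\<lambda>w. \<Sum>u\<in>spt p. p u * (\<Sum>v\<in>spt q. q v * wimg f (u @ v) w))"
    by (simp add: subst_lin fq)
  also have "\<dots> = (\<lambda>w. \<Sum>u\<in>spt p. p u * (\<Sum>v\<in>spt q. q v * ncmul (wimg f u) (wimg f v) w))"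
    by (simp add: wimg_append f)
  also have "\<dots> = ncmul (subst f p) (subst f q)"
    unfolding subst_def by (simp add: ncmul_sum_left ncmul_sum_right fp fq)
  finally show ?thesis .
qed

lemma ncadd_ncA[simp]:
  assumes "p \<in> ncA" "q \<in> ncA" shows "ncadd p q \<in> (ncA :: 'k::comm_ring_1 nc set)"
proof -
  have "spt (ncadd p q) \<subseteq> spt p \<union> spt q" by (auto simp: ncadd_def)
  thus ?thesis using assms by (auto simp: ncA_def fin_supp_def intro: finite_subset)
qed

lemma ncsmult_ncA[simp]:
  assumes "p \<in> ncA" shows "ncsmult c p \<in> (ncA :: 'k::comm_ring_1 nc set)"
proof -
  have "spt (ncsmult c p) \<subseteq> spt p" by (auto simp: ncsmult_def)
  thus ?thesis using assms by (auto simp: ncA_def fin_supp_def intro: finite_subset)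
qed

lemma subst_add:
  assumes p: "p \<in> ncA" and q: "q \<in> ncA"
  shows "subst f (ncadd p q) = ncadd (subst f p) (subst f q)"
proof -
  let ?X = "spt p \<union> spt q"
  have X: "finite ?X" using p q by (auto simp: ncA_finite)
  have 1: "subst f (ncadd p q) = (\<lambda>w. \<Sum>u\<in>?X. ncadd p q u * wimg f u w)"
    by (rule subst_superset) (use p q X ncadd_ncA[OF p q] in \<open>auto simp: ncadd_def\<close>)
  have 2: "subst f p = (\<lambda>w. \<Sum>u\<in>?X. p u * wimg f u w)"
    by (rule subst_superset) (use p q X in \<open>auto\<close>)
  have 3: "subst f q = (\<lambda>w. \<Sum>u\<in>?X. q u * wimg f u w)"
    by (rule subst_superset) (use p q X in \<open>auto\<close>)
  show ?thesis unfolding 1 2 3 by (simp add: ncadd_def sum.distrib distrib_right)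
qed

lemma subst_smult:
  assumes p: "p \<in> ncA"
  shows "subst f (ncsmult c p) = ncsmult c (subst f p)"
proof -
  have X: "finite (spt p)" using p by (auto simp: ncA_finite)
  have 1: "subst f (ncsmult c p) = (\<lambda>w. \<Sum>u\<in>spt p. ncsmult c p u * wimg f u w)"
    by (rule subst_superset) (use p X ncsmult_ncA[OF p, of c] in \<open>auto simp: ncsmult_def\<close>)
  have 2: "subst f p = (\<lambda>w. \<Sum>u\<in>spt p. p u * wimg f u w)"
    by (rule subst_superset) (use p X in \<open>auto\<close>)
  show ?thesis unfolding 1 2 by (simp add: ncsmult_def sum_distrib_left mult.assoc)
qed

lemma wimg_subst:
  "gens_ok f \<Longrightarrow> gens_ok g \<Longrightarrow> subst f (wimg g u) = wimg (\<lambda>x. subst f (g x)) u"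
  by (induction u) (auto simp: subst_mul gens_ok_def)

lemma subst_subst:
  assumes f: "gens_ok f" and g: "gens_ok g" and p: "p \<in> ncA"
  shows "subst f (subst g p) = subst (\<lambda>x. subst f (g x)) p"
proof -
  have fp: "finite (spt p)" using p by (auto simp: ncA_finite)
  have "subst f (subst g p) = (\<lambda>w. \<Sum>u\<in>spt p. p u * subst f (wimg g u) w)"
    unfolding subst_def[of g] by (rule subst_lin) (use fp g in auto)
  thus ?thesis by (simp add: wimg_subst f g subst_def[of "\<lambda>x. subst f (g x)"])
qed

lemma wimg_id: "wimg (\<lambda>x. mono [x]) u = mono u"
  by (induction u) (auto simp: ncone_mono ncmul_mono)

lemma subst_id: "p \<in> ncA \<Longrightarrow> subst (\<lambda>x. mono [x]) p = p"
  unfolding subst_def wimg_id by (rule sym[OF ncA_expand'])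

lemma subst_inverse:
  assumes "gens_ok f" "gens_ok g" "\<And>x. subst f (g x) = mono [x]" "p \<in> ncA"
  shows "subst f (subst g p) = p"
  using assms by (simp add: subst_subst subst_id)

lemma subst_alg_aut:
  assumes f: "gens_ok f" and g: "gens_ok g"
    and fg: "\<And>x. subst f (g x) = mono [x]" and gf: "\<And>x. subst g (f x) = mono [x]"
  shows "is_alg_aut (subst f :: 'k::field nc \<Rightarrow> _)"
  unfolding is_alg_aut_def
proof (intro conjI ballI allI)
  show "bij_betw (subst f) ncA ncA"
    by (rule bij_betw_byWitness[where f'="subst g"]) (auto simp: f g subst_inverse fg gf)
qed (auto simp: subst_add subst_smult subst_mul f)

lemma fin_supp_finite: "fin_supp d \<Longrightarrow> finite (spt d)"
  by (simp add: fin_supp_def)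

lemma tens2_fin_supp:
  assumes "a \<in> ncA" "b \<in> ncA" shows "fin_supp (tens2 a b :: 'k::comm_ring_1 nc2)"
proof -
  have "spt (tens2 a b) \<subseteq> spt a \<times> spt b" by (auto simp: tens2_def)
  thus ?thesis using assms by (auto simp: fin_supp_def ncA_finite intro: finite_subset)
qed

lemma d_expand:
  assumes "fin_supp (d :: 'k::comm_ring_1 nc2)"
  shows "d = (\<lambda>x. \<Sum>p\<in>spt d. d p * tens2 (mono (fst p)) (mono (snd p)) x)"
proof
  fix x :: "gen list \<times> gen list"
  obtain u v where x: "x = (u, v)" by (cases x)
  have "(\<Sum>p\<in>spt d. d p * tens2 (mono (fst p)) (mono (snd p)) x) =
        (\<Sum>p\<in>spt d. if p = x then d p else 0)"
    by (rule sum.cong) (auto simp: tens2_def mono_def x)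
  also have "\<dots> = d x" using assms by (auto simp: fin_supp_def)
  finally show "d x = (\<Sum>p\<in>spt d. d p * tens2 (mono (fst p)) (mono (snd p)) x)" by simp
qed

lemma tmap2_form:
  "tmap2 \<psi> d = (\<lambda>x. \<Sum>p\<in>spt d. d p * tens2 (\<psi> (mono (fst p))) (\<psi> (mono (snd p))) x)"
  by (rule ext) (auto simp: tmap2_def tens2_def mult.assoc split: prod.split)

lemma tmap2_superset:
  assumes "finite X" "spt d \<subseteq> X"
  shows "tmap2 \<psi> d = (\<lambda>x. \<Sum>p\<in>X. d p * tens2 (\<psi> (mono (fst p))) (\<psi> (mono (snd p))) x)"
  unfolding tmap2_form by (rule ext, rule sum.mono_neutral_left) (use assms in auto)

lemma tmap2_lin:
  assumes I: "finite I" and E: "\<And>i. i \<in> I \<Longrightarrow> fin_supp (E i)"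
  shows "tmap2 \<psi> (\<lambda>x. \<Sum>i\<in>I. c i * E i x) = (\<lambda>x. \<Sum>i\<in>I. c i * tmap2 \<psi> (E i) x)"
proof -
  define U where "U = (\<Union>i\<in>I. spt (E i))"
  have U: "finite U" using I E by (auto simp: U_def fin_supp_def)
  have "tmap2 \<psi> (\<lambda>x. \<Sum>i\<in>I. c i * E i x) =
     (\<lambda>x. \<Sum>p\<in>U. (\<Sum>i\<in>I. c i * E i p) * tens2 (\<psi> (mono (fst p))) (\<psi> (mono (snd p))) x)"
    by (rule tmap2_superset) (use U combo_supp[of c E I] in \<open>auto simp: U_def\<close>)
  also have "\<dots> = (\<lambda>x. \<Sum>i\<in>I. c i * (\<Sum>p\<in>U. E i p * tens2 (\<psi> (mono (fst p))) (\<psi> (mono (snd p))) x))"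
    by (simp add: combo_ncA_sum_swap I U)
  also have "\<dots> = (\<lambda>x. \<Sum>i\<in>I. c i * tmap2 \<psi> (E i) x)"
  proof (rule ext, rule sum.cong[OF refl])
    fix x i assume "i \<in> I"
    hence "tmap2 \<psi> (E i) = (\<lambda>x. \<Sum>p\<in>U. E i p * tens2 (\<psi> (mono (fst p))) (\<psi> (mono (snd p))) x)"
      by (intro tmap2_superset U) (auto simp: U_def)
    thus "c i * (\<Sum>p\<in>U. E i p * tens2 (\<psi> (mono (fst p))) (\<psi> (mono (snd p))) x) = c i * tmap2 \<psi> (E i) x"
      by simp
  qed
  finally show ?thesis .
qed

lemma tmap2_tens:
  assumes a: "a \<in> ncA" and b: "b \<in> ncA"
  shows "tmap2 (subst f) (tens2 a b) = tens2 (subst f a) (subst f b)"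
proof -
  have X: "finite (spt a \<times> spt b)" using a b by (auto simp: ncA_finite)
  have "tmap2 (subst f) (tens2 a b) =
    (\<lambda>x. \<Sum>p\<in>spt a \<times> spt b. tens2 a b p * tens2 (wimg f (fst p)) (wimg f (snd p)) x)"
    by (subst tmap2_superset[OF X]) (auto simp: tens2_def)
  also have "\<dots> = tens2 (subst f a) (subst f b)"
    by (rule ext) (auto simp: tens2_def subst_def sum_product sum.cartesian_product mult_ac intro!: sum.cong split: prod.split)
  finally show ?thesis .
qed

lemma tmap2_fin_supp:
  assumes f: "gens_ok f" and d: "fin_supp d"
  shows "fin_supp (tmap2 (subst f) d)"
  unfolding tmap2_form
  by (rule combo_fin_supp) (use d f in \<open>auto simp: fin_supp_def intro!: tens2_fin_supp[unfolded fin_supp_def]\<close>)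

lemma rmul2_ncmul: "rmul2 d y (u, v) = ncmul (\<lambda>z. d (u, z)) y v"
  by (simp add: rmul2_def ncmul_def)

lemma lmul2_ncmul: "lmul2 y d (u, v) = ncmul y (\<lambda>z. d (z, v)) u"
  by (simp add: lmul2_def ncmul_def)

lemma rmul2_lin:
  "finite I \<Longrightarrow> rmul2 (\<lambda>x. \<Sum>i\<in>I. c i * E i x) y = (\<lambda>x. \<Sum>i\<in>I. c i * rmul2 (E i) y x)"
  by (rule ext) (auto simp: rmul2_ncmul ncmul_sum_left[where A="\<lambda>i z. E i (_, z)"])

lemma lmul2_lin:
  "finite I \<Longrightarrow> lmul2 y (\<lambda>x. \<Sum>i\<in>I. c i * E i x) = (\<lambda>x. \<Sum>i\<in>I. c i * lmul2 y (E i) x)"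
  by (rule ext) (auto simp: lmul2_ncmul ncmul_sum_right[where A="\<lambda>i z. E i (z, _)"])

lemma rmul2_tens: "rmul2 (tens2 a b) y = tens2 a (ncmul b y)"
  by (rule ext) (auto simp: rmul2_def tens2_def ncmul_def sum_distrib_left mult.assoc)

lemma lmul2_tens: "lmul2 y (tens2 a b) = tens2 (ncmul y a) b"
  by (rule ext) (auto simp: lmul2_def tens2_def ncmul_def sum_distrib_right sum_distrib_left mult_ac)

lemma rmul2_form:
  assumes "fin_supp d"
  shows "rmul2 d y = (\<lambda>x. \<Sum>p\<in>spt d. d p * tens2 (mono (fst p)) (ncmul (mono (snd p)) y) x)"
  by (subst d_expand[OF assms]) (simp add: rmul2_lin fin_supp_finite[OF assms] rmul2_tens)

lemma lmul2_form:
  assumes "fin_supp d"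
  shows "lmul2 y d = (\<lambda>x. \<Sum>p\<in>spt d. d p * tens2 (ncmul y (mono (fst p))) (mono (snd p)) x)"
  by (subst d_expand[OF assms]) (simp add: lmul2_lin fin_supp_finite[OF assms] lmul2_tens)

lemma rmul2_fin_supp:
  assumes "fin_supp d" "y \<in> ncA" shows "fin_supp (rmul2 d y)"
  unfolding rmul2_form[OF assms(1)]
  by (rule combo_fin_supp) (use assms in \<open>auto simp: fin_supp_finite intro: tens2_fin_supp\<close>)

lemma lmul2_fin_supp:
  assumes "fin_supp d" "y \<in> ncA" shows "fin_supp (lmul2 y d)"
  unfolding lmul2_form[OF assms(1)]
  by (rule combo_fin_supp) (use assms in \<open>auto simp: fin_supp_finite intro: tens2_fin_supp\<close>)

lemma tmap2_rmul2:
  assumes f: "gens_ok f" and d: "fin_supp d" and y: "y \<in> ncA"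
  shows "tmap2 (subst f) (rmul2 d y) = rmul2 (tmap2 (subst f) d) (subst f y)"
proof -
  have fd: "finite (spt d)" using d by (rule fin_supp_finite)
  have "tmap2 (subst f) (rmul2 d y) =
     (\<lambda>x. \<Sum>p\<in>spt d. d p * tmap2 (subst f) (tens2 (mono (fst p)) (ncmul (mono (snd p)) y)) x)"
    unfolding rmul2_form[OF d] by (rule tmap2_lin) (use fd y in \<open>auto intro: tens2_fin_supp\<close>)
  also have "\<dots> = (\<lambda>x. \<Sum>p\<in>spt d. d p * rmul2 (tens2 (wimg f (fst p)) (wimg f (snd p))) (subst f y) x)"
    by (simp add: tmap2_tens y rmul2_tens subst_mul f)
  also have "\<dots> = rmul2 (tmap2 (subst f) d) (subst f y)"
    unfolding tmap2_form by (simp add: rmul2_lin fd)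
  finally show ?thesis .
qed

lemma tmap2_lmul2:
  assumes f: "gens_ok f" and d: "fin_supp d" and y: "y \<in> ncA"
  shows "tmap2 (subst f) (lmul2 y d) = lmul2 (subst f y) (tmap2 (subst f) d)"
proof -
  have fd: "finite (spt d)" using d by (rule fin_supp_finite)
  have "tmap2 (subst f) (lmul2 y d) =
     (\<lambda>x. \<Sum>p\<in>spt d. d p * tmap2 (subst f) (tens2 (ncmul y (mono (fst p))) (mono (snd p))) x)"
    unfolding lmul2_form[OF d] by (rule tmap2_lin) (use fd y in \<open>auto intro: tens2_fin_supp\<close>)
  also have "\<dots> = (\<lambda>x. \<Sum>p\<in>spt d. d p * lmul2 (subst f y) (tens2 (wimg f (fst p)) (wimg f (snd p))) x)"
    by (simp add: tmap2_tens y lmul2_tens subst_mul f)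
  also have "\<dots> = lmul2 (subst f y) (tmap2 (subst f) d)"
    unfolding tmap2_form by (simp add: lmul2_lin fd)
  finally show ?thesis .
qed

lemma tmap2_add:
  assumes d: "fin_supp d" and e: "fin_supp e"
  shows "tmap2 \<psi> (ncadd d e) = ncadd (tmap2 \<psi> d) (tmap2 \<psi> e)"
proof -
  let ?X = "spt d \<union> spt e"
  have X: "finite ?X" using d e by (auto simp: fin_supp_def)
  show ?thesis
    by (subst (1 2 3) tmap2_superset[OF X]) (auto simp: ncadd_def sum.distrib distrib_right)
qed

lemma tmap2_smult:
  assumes d: "fin_supp d"
  shows "tmap2 \<psi> (ncsmult c d) = ncsmult c (tmap2 \<psi> d)"
proof -
  have X: "finite (spt d)" using d by (auto simp: fin_supp_def)
  show ?thesis
    by (subst (1 2) tmap2_superset[OF X]) (auto simp: ncsmult_def sum_distrib_left mult.assoc)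
qed

lemma tmap2_tens_mono: "tmap2 \<psi> (tens2 (mono a) (mono b)) = tens2 (\<psi> (mono a)) (\<psi> (mono b))"
proof -
  have "spt (tens2 (mono a) (mono b) :: 'k::field nc2) = {(a, b)}" by (auto simp: tens2_def mono_def split: if_splits)
  note S = this
  show ?thesis unfolding tmap2_form S by (rule ext) (auto simp: tens2_def mono_def)
qed

lemma tmap2_negswap:
  assumes d: "fin_supp d"
  shows "tmap2 \<psi> (ncneg (swap2 d)) = ncneg (swap2 (tmap2 \<psi> d))"
proof -
  have fd: "finite (spt d)" using d by (rule fin_supp_finite)
  have e: "ncneg (swap2 d) = (\<lambda>x. \<Sum>p\<in>spt d. (- d p) * tens2 (mono (snd p)) (mono (fst p)) x)"
    by (subst (1) d_expand[OF d]) (auto simp: ncneg_def swap2_def tens2_def sum_negf mult_ac)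
  have "tmap2 \<psi> (ncneg (swap2 d)) = tmap2 \<psi> (\<lambda>x. \<Sum>p\<in>spt d. (- d p) * tens2 (mono (snd p)) (mono (fst p)) x)"
    by (simp only: e)
  also have "\<dots> = (\<lambda>x. \<Sum>p\<in>spt d. (- d p) * tmap2 \<psi> (tens2 (mono (snd p)) (mono (fst p))) x)"
    by (rule tmap2_lin) (auto simp: fd intro: tens2_fin_supp)
  also have "\<dots> = ncneg (swap2 (tmap2 \<psi> d))"
    unfolding tmap2_tens_mono unfolding tmap2_form
    by (rule ext) (auto simp: ncneg_def swap2_def tens2_def sum_negf mult_ac)
  finally show ?thesis .
qed

lemma sum_drop_nil:
  "(\<Sum>j\<in>{0..length v}. F j * (if drop j v = [] then 1 else 0)) = (F (length v) :: 'k::comm_ring_1)"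
proof -
  have "(\<Sum>j\<in>{0..length v}. F j * (if drop j v = [] then 1 else 0)) =
        (\<Sum>j\<in>{0..length v}. if j = length v then F j else 0)"
    by (rule sum.cong) auto
  thus ?thesis by simp
qed

lemma sum_take_nil:
  "(\<Sum>i\<in>{0..length u}. (if take i u = [] then 1 else 0) * F i) = (F 0 :: 'k::comm_ring_1)"
proof -
  have "(\<Sum>i\<in>{0..length u}. (if take i u = [] then 1 else 0) * F i) =
        (\<Sum>i\<in>{0..length u}. if i = 0 then F i else 0)"
    by (rule sum.cong) auto
  thus ?thesis by simp
qed

lemma rmul2_one: "rmul2 d ncone = (d :: 'k::comm_ring_1 nc2)"
proof (rule ext, clarify)
  fix u v
  show "rmul2 d ncone (u,v) = d (u,v)"
    unfolding rmul2_def ncone_def using sum_drop_nil[of "\<lambda>j. d (u, take j v)" v] by simp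
qed

lemma lmul2_one: "lmul2 ncone d = (d :: 'k::comm_ring_1 nc2)"
proof (rule ext, clarify)
  fix u v
  show "lmul2 ncone d (u,v) = d (u,v)"
    unfolding lmul2_def ncone_def using sum_take_nil[of u "\<lambda>i. d (drop i u, v)"] by simp
qed

lemma db_one_right:
  assumes db: "is_double_bracket br" and a: "a \<in> ncA"
  shows "br a ncone = (\<lambda>x. 0)"
proof -
  have "br a (ncmul ncone ncone) = ncadd (rmul2 (br a ncone) ncone) (lmul2 ncone (br a ncone))"
    using db a ncone_ncA unfolding is_double_bracket_def by blast
  hence "br a ncone = ncadd (br a ncone) (br a ncone)"
    by (simp only: ncmul_one_left[OF ncone_ncA] rmul2_one lmul2_one)
  hence "\<forall>x. br a ncone x = br a ncone x + br a ncone x" by (metis ncadd_def)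
  thus ?thesis by (intro ext) (metis add_cancel_right_right)
qed

lemma db_one_left:
  assumes db: "is_double_bracket br" and a: "a \<in> ncA"
  shows "br ncone a = (\<lambda>x. 0)"
proof -
  have "br ncone a = ncneg (swap2 (br a ncone))"
    using db a ncone_ncA unfolding is_double_bracket_def by blast
  thus ?thesis using db_one_right[OF db a] by (simp add: ncneg_def swap2_def split_def)
qed

definition transp :: "(gen \<Rightarrow> 'k::field nc) \<Rightarrow> (gen \<Rightarrow> 'k nc) \<Rightarrow> ('k nc \<Rightarrow> 'k nc \<Rightarrow> 'k nc2) \<Rightarrow> 'k nc \<Rightarrow> 'k nc \<Rightarrow> 'k nc2" where
  "transp f g br = (\<lambda>a b. tmap2 (subst f) (br (subst g a) (subst g b)))"

locale inv_pair =
  fixes f g :: "gen \<Rightarrow> 'k::field nc"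
  assumes f: "gens_ok f" and g: "gens_ok g"
    and fg: "\<And>x. subst f (g x) = mono [x]" and gf: "\<And>x. subst g (f x) = mono [x]"
begin

lemma fg_inv: "p \<in> ncA \<Longrightarrow> subst f (subst g p) = p"
  by (rule subst_inverse[OF f g fg])

lemma gf_inv: "p \<in> ncA \<Longrightarrow> subst g (subst f p) = p"
  by (rule subst_inverse[OF g f gf])

lemma transp_db:
  assumes db: "is_double_bracket br"
  shows "is_double_bracket (transp f g br)"
proof -
  note D0 = db[unfolded is_double_bracket_def]
  have addL: "\<And>a b c. a \<in> ncA \<Longrightarrow> b \<in> ncA \<Longrightarrow> c \<in> ncA \<Longrightarrow> br (ncadd a b) c = ncadd (br a c) (br b c)"
   and addR: "\<And>a b c. a \<in> ncA \<Longrightarrow> b \<in> ncA \<Longrightarrow> c \<in> ncA \<Longrightarrow> br a (ncadd b c) = ncadd (br a b) (br a c)"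
   and smL: "\<And>x a b. a \<in> ncA \<Longrightarrow> b \<in> ncA \<Longrightarrow> br (ncsmult x a) b = ncsmult x (br a b)"
   and smR: "\<And>x a b. a \<in> ncA \<Longrightarrow> b \<in> ncA \<Longrightarrow> br a (ncsmult x b) = ncsmult x (br a b)"
   and asym: "\<And>a b. a \<in> ncA \<Longrightarrow> b \<in> ncA \<Longrightarrow> br a b = ncneg (swap2 (br b a))"
   and leib: "\<And>a b c. a \<in> ncA \<Longrightarrow> b \<in> ncA \<Longrightarrow> c \<in> ncA \<Longrightarrow> br a (ncmul b c) = ncadd (rmul2 (br a b) c) (lmul2 b (br a c))"
    using D0 by blast+
  have fs: "\<And>a b. a \<in> ncA \<Longrightarrow> b \<in> ncA \<Longrightarrow> fin_supp (br a b)" using D0 by blast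
  have gA: "\<And>a. a \<in> ncA \<Longrightarrow> subst g a \<in> ncA" using g by simp
  show ?thesis unfolding is_double_bracket_def transp_def
  proof (intro conjI ballI allI)
    fix a b :: "'k nc" assume "a \<in> ncA" "b \<in> ncA"
    thus "fin_supp (tmap2 (subst f) (br (subst g a) (subst g b)))"
      by (intro tmap2_fin_supp f fs gA)
  next
    fix a b c :: "'k nc" assume a: "a \<in> ncA" and b: "b \<in> ncA" and c: "c \<in> ncA"
    show "tmap2 (subst f) (br (subst g (ncadd a b)) (subst g c)) =
          ncadd (tmap2 (subst f) (br (subst g a) (subst g c))) (tmap2 (subst f) (br (subst g b) (subst g c)))"
      using a b c by (simp add: subst_add tmap2_add fs gA addL)
    show "tmap2 (subst f) (br (subst g a) (subst g (ncadd b c))) =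
          ncadd (tmap2 (subst f) (br (subst g a) (subst g b))) (tmap2 (subst f) (br (subst g a) (subst g c)))"
      using a b c by (simp add: subst_add tmap2_add fs gA addR)
    have "br (subst g a) (subst g (ncmul b c)) =
          ncadd (rmul2 (br (subst g a) (subst g b)) (subst g c)) (lmul2 (subst g b) (br (subst g a) (subst g c)))"
      using a b c by (simp add: subst_mul g gA leib)
    thus "tmap2 (subst f) (br (subst g a) (subst g (ncmul b c))) =
          ncadd (rmul2 (tmap2 (subst f) (br (subst g a) (subst g b))) c)
                (lmul2 b (tmap2 (subst f) (br (subst g a) (subst g c))))"
      using a b c by (simp add: tmap2_add rmul2_fin_supp lmul2_fin_supp fs gA tmap2_rmul2 tmap2_lmul2 f fg_inv)
  next
    fix x :: 'k and a b :: "'k nc" assume a: "a \<in> ncA" and b: "b \<in> ncA"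
    show "tmap2 (subst f) (br (subst g (ncsmult x a)) (subst g b)) = ncsmult x (tmap2 (subst f) (br (subst g a) (subst g b)))"
      using a b by (simp add: subst_smult tmap2_smult fs gA smL)
    show "tmap2 (subst f) (br (subst g a) (subst g (ncsmult x b))) = ncsmult x (tmap2 (subst f) (br (subst g a) (subst g b)))"
      using a b by (simp add: subst_smult tmap2_smult fs gA smR)
  next
    fix a b :: "'k nc" assume a: "a \<in> ncA" and b: "b \<in> ncA"
    show "tmap2 (subst f) (br (subst g a) (subst g b)) = ncneg (swap2 (tmap2 (subst f) (br (subst g b) (subst g a))))"
      using a b by (subst asym) (simp_all add: tmap2_negswap fs gA)
  qed
qed

lemma transp_iso:
  assumes db: "is_double_bracket br"
  shows "isomorphic_dqp br (transp f g br)"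
  unfolding isomorphic_dqp_def
proof (intro exI conjI ballI)
  show "is_alg_aut (subst f)" by (rule subst_alg_aut[OF f g fg gf])
  fix a b :: "'k nc" assume "a \<in> ncA" "b \<in> ncA"
  thus "tmap2 (subst f) (br a b) = transp f g br (subst f a) (subst f b)"
    by (simp add: transp_def gf_inv)
qed

end

definition keys :: "('k \<times> gen list \<times> gen list) list \<Rightarrow> (gen list \<times> gen list) list" where
  "keys L = map (\<lambda>(c, u, v). (u, v)) L"

lemma lc_Nil[simp]: "lc [] p = 0"
  by (simp add: lc_def)

lemma lc_Cons[simp]: "lc ((c, u, v) # L) p = (if (u, v) = p then c else 0) + lc L p"
  by (simp add: lc_def)

lemma lc_append[simp]: "lc (L1 @ L2) p = lc L1 p + lc L2 p"
  by (simp add: lc_def)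

lemma lc_notkey: "p \<notin> set (keys L) \<Longrightarrow> lc L p = 0"
  by (induction L) (auto simp: keys_def)

lemma spt_lc: "spt (lc L) \<subseteq> set (keys L)"
  using lc_notkey by blast

lemma lc_fin_supp[simp]: "fin_supp (lc L)"
  unfolding fin_supp_def by (rule finite_subset[OF spt_lc]) simp

lemma sum_lc_X:
  assumes "finite X" "set (keys L) \<subseteq> X"
  shows "(\<Sum>p\<in>X. lc L p * G p) = sum_list (map (\<lambda>(c, u, v). c * G (u, v)) L)"
  using assms(2)
proof (induction L)
  case Nil thus ?case by simp
next
  case (Cons a L)
  obtain c u v where a: "a = (c, u, v)" by (cases a)
  have uv: "(u, v) \<in> X" using Cons.prems a by (auto simp: keys_def)
  have "\<And>p. lc (a # L) p * G p = (if (u, v) = p then c * G p else 0) + lc L p * G p"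
    by (simp add: a distrib_right)
  hence "(\<Sum>p\<in>X. lc (a # L) p * G p) = (\<Sum>p\<in>X. (if (u, v) = p then c * G p else 0)) + (\<Sum>p\<in>X. lc L p * G p)"
    by (simp add: sum.distrib)
  also have "\<dots> = c * G (u, v) + sum_list (map (\<lambda>(c, u, v). c * G (u, v)) L)"
    using uv assms(1) Cons by (simp add: keys_def split_def)
  finally show ?case by (simp add: a split_def)
qed

lemma sum_lc:
  "(\<Sum>p\<in>spt (lc L). lc L p * G p) = sum_list (map (\<lambda>(c, u, v). c * G (u, v)) L)"
proof -
  have "(\<Sum>p\<in>spt (lc L). lc L p * G p) = (\<Sum>p\<in>set (keys L). lc L p * G p)"
    by (rule sum.mono_neutral_left) (auto simp: spt_lc)
  thus ?thesis by (simp add: sum_lc_X)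
qed

lemma lc_eval: "lc L p = sum_list (map (\<lambda>(c, u, v). c * (if (u, v) = p then 1 else 0)) L)"
  by (induction L) auto

lemma tens2_mono_eval: "tens2 (mono a) (mono b) p = (if (a, b) = p then 1 else 0)"
  by (cases p) (auto simp: tens2_def mono_def)

lemma rmul2_lc_mono: "rmul2 (lc L) (mono w) = lc (map (\<lambda>(c, a, b). (c, a, b @ w)) L)"
proof (rule ext)
  fix p
  have "rmul2 (lc L) (mono w) p = (\<Sum>q\<in>spt (lc L). lc L q * tens2 (mono (fst q)) (mono (snd q @ w)) p)"
    by (simp add: rmul2_form ncmul_mono)
  also have "\<dots> = lc (map (\<lambda>(c, a, b). (c, a, b @ w)) L) p"
    by (simp add: sum_lc lc_eval[of "map _ L"] tens2_mono_eval split_def o_def)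
  finally show "rmul2 (lc L) (mono w) p = lc (map (\<lambda>(c, a, b). (c, a, b @ w)) L) p" .
qed

lemma lmul2_lc_mono: "lmul2 (mono w) (lc L) = lc (map (\<lambda>(c, a, b). (c, w @ a, b)) L)"
proof (rule ext)
  fix p
  have "lmul2 (mono w) (lc L) p = (\<Sum>q\<in>spt (lc L). lc L q * tens2 (mono (w @ fst q)) (mono (snd q)) p)"
    by (simp add: lmul2_form ncmul_mono)
  also have "\<dots> = lc (map (\<lambda>(c, a, b). (c, w @ a, b)) L) p"
    by (simp add: sum_lc lc_eval[of "map _ L"] tens2_mono_eval split_def o_def)
  finally show "lmul2 (mono w) (lc L) p = lc (map (\<lambda>(c, a, b). (c, w @ a, b)) L) p" .
qed

fun BW :: "(gen \<Rightarrow> gen \<Rightarrow> ('k \<times> gen list \<times> gen list) list) \<Rightarrow> gen \<Rightarrow> gen list \<Rightarrow> ('k \<times> gen list \<times> gen list) list" where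
  "BW G x [] = []"
| "BW G x (y # w) = map (\<lambda>(c, a, b). (c, a, b @ w)) (G x y) @ map (\<lambda>(c, a, b). (c, y # a, b)) (BW G x w)"

lemma ncadd_lc: "ncadd (lc L1) (lc L2) = lc (L1 @ L2)"
  by (rule ext) (simp add: ncadd_def)

lemma br_BW:
  assumes db: "is_double_bracket br" and G: "\<And>x y. br (mono [x]) (mono [y]) = lc (G x y)"
  shows "br (mono [x]) (mono w) = lc (BW G x w)"
proof (induction w)
  case Nil
  show ?case using db_one_right[OF db mono_ncA, of "[x]"] by (auto simp: ncone_mono fun_eq_iff)
next
  case (Cons y w)
  have "br (mono [x]) (mono (y # w)) = br (mono [x]) (ncmul (mono [y]) (mono w))"
    by (simp add: ncmul_mono)
  also have "\<dots> = ncadd (rmul2 (br (mono [x]) (mono [y])) (mono w)) (lmul2 (mono [y]) (br (mono [x]) (mono w)))"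
    using db unfolding is_double_bracket_def by (meson mono_ncA)
  also have "\<dots> = lc (BW G x (y # w))"
    by (simp add: G Cons rmul2_lc_mono lmul2_lc_mono ncadd_lc)
  finally show ?case .
qed

lemma brL_lc:
  "brL br a (lc L) (x, y, z) = sum_list (map (\<lambda>(c, u, v). c * (br a (mono u) (x, y) * (if v = z then 1 else 0))) L)"
  unfolding brL_def by (simp add: mult.assoc sum_lc[where G="\<lambda>p. br a (mono (fst p)) (x, y) * (if snd p = z then 1 else 0)"])

lemma qp_extract:
  assumes db: "is_double_bracket br" and G: "\<And>x y. br (mono [x]) (mono [y]) = lc (G x y)"
    and qp: "quasi_poisson br"
  shows "sum_list (map (\<lambda>(k, u, v). k * (lc (BW G a u) (x, y) * (if v = z then 1 else 0))) (G b c))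
       + (sum_list (map (\<lambda>(k, u, v). k * (lc (BW G b u) (y, z) * (if v = x then 1 else 0))) (G c a))
       + sum_list (map (\<lambda>(k, u, v). k * (lc (BW G c u) (z, x) * (if v = y then 1 else 0))) (G a b)))
       = qp_rhs (mono [a]) (mono [b]) (mono [c]) (x, y, z)"
proof -
  have "triple_bracket br (mono [a]) (mono [b]) (mono [c]) (x, y, z) = qp_rhs (mono [a]) (mono [b]) (mono [c]) (x, y, z)"
    using qp unfolding quasi_poisson_def by simp
  thus ?thesis
    by (simp add: triple_bracket_def ncadd_def tau3_def G brL_lc br_BW[OF db G])
qed

definition negswap :: "('k::field \<times> gen list \<times> gen list) list \<Rightarrow> ('k \<times> gen list \<times> gen list) list" where
  "negswap L = map (\<lambda>(c, u, v). (- c, v, u)) L"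

lemma negswap_lc: "ncneg (swap2 (lc L)) = lc (negswap L)"
  by (rule ext) (induction L, auto simp: ncneg_def swap2_def negswap_def lc_def split: prod.splits)

locale hyps =
  fixes br :: "'k::field_char_0 nc \<Rightarrow> 'k nc \<Rightarrow> 'k nc2"
    and lam \<mu> \<nu> l m n :: 'k
    and \<alpha>0 \<alpha>0' \<beta>0 \<beta>0' \<gamma>0 \<gamma>1 \<alpha>1 \<alpha>1' \<alpha>2 \<alpha>2' \<alpha>3 \<alpha>3' \<beta>1 \<beta>1' \<beta>2 \<beta>2' \<gamma> :: 'k
  assumes db: "is_double_bracket br"
    and tt: "br tgen tgen = lc [(lam, [T], []), (-lam, [], [T]),
                                (\<mu>, [T,T], []), (-\<mu>, [], [T,T]),
                                (\<nu>, [T,T], [T]), (-\<nu>, [T], [T,T])]"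
    and ss: "br sgen sgen = lc [(l, [S], []), (-l, [], [S]),
                                (m, [S,S], []), (-m, [], [S,S]),
                                (n, [S,S], [S]), (-n, [S], [S,S])]"
    and cond_t: "4 * (\<mu>^2 - lam * \<nu>) = 1"
    and cond_s: "4 * (m^2 - l * n) = 1"
    and ts: "br tgen sgen = lc [(\<alpha>0, [T,T], []), (\<alpha>0', [], [T,T]),
                                (\<beta>0, [S,S], []), (\<beta>0', [], [S,S]),
                                (\<gamma>0, [T], [T]), (\<gamma>1, [S], [S]),
                                (\<alpha>1, [T,S], []), (\<alpha>1', [S,T], []),
                                (\<alpha>2, [T], [S]), (\<alpha>2', [S], [T]),
                                (\<alpha>3, [], [T,S]), (\<alpha>3', [], [S,T]),
                                (\<beta>1, [T], []), (\<beta>1', [], [T]),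
                                (\<beta>2, [S], []), (\<beta>2', [], [S]),
                                (\<gamma>, [], [])]"
    and qp: "quasi_poisson br"
begin

definition "ttL = [(lam, [T], []), (-lam, [], [T]),
                                (\<mu>, [T,T], []), (-\<mu>, [], [T,T]),
                                (\<nu>, [T,T], [T]), (-\<nu>, [T], [T,T])]"
definition "ssL = [(l, [S], []), (-l, [], [S]),
                                (m, [S,S], []), (-m, [], [S,S]),
                                (n, [S,S], [S]), (-n, [S], [S,S])]"
definition "tsL = [(\<alpha>0, [T,T], []), (\<alpha>0', [], [T,T]),
                                (\<beta>0, [S,S], []), (\<beta>0', [], [S,S]),
                                (\<gamma>0, [T], [T]), (\<gamma>1, [S], [S]),
                                (\<alpha>1, [T,S], []), (\<alpha>1', [S,T], []),
                                (\<alpha>2, [T], [S]), (\<alpha>2', [S], [T]),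
                                (\<alpha>3, [], [T,S]), (\<alpha>3', [], [S,T]),
                                (\<beta>1, [T], []), (\<beta>1', [], [T]),
                                (\<beta>2, [S], []), (\<beta>2', [], [S]),
                                (\<gamma>, [], [])]"

fun GG :: "gen \<Rightarrow> gen \<Rightarrow> ('k \<times> gen list \<times> gen list) list" where
  "GG T T = ttL" | "GG S S = ssL" | "GG T S = tsL" | "GG S T = negswap tsL"

lemma br_G: "br (mono [x]) (mono [y]) = lc (GG x y)"
proof (cases x; cases y)
  assume "x = S" "y = T"
  have "br sgen tgen = ncneg (swap2 (br tgen sgen))"
    using db unfolding is_double_bracket_def ncgen_def by (meson mono_ncA)
  thus ?thesis using \<open>x = S\<close> \<open>y = T\<close> by (simp add: ts[unfolded ncgen_def] ncgen_def negswap_lc tsL_def)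
qed (use tt[unfolded ncgen_def] ss[unfolded ncgen_def] ts[unfolded ncgen_def] in \<open>auto simp: ttL_def ssL_def tsL_def\<close>)

lemmas EX = qp_extract[OF db br_G qp]

lemma e1: "\<alpha>0 * \<alpha>0 = 0"
  using EX[where a=S and b=S and c=T and x="[]" and y="[]" and z="[T,T,T]"]
  by (simp add: ttL_def ssL_def tsL_def negswap_def qp_rhs_def tens3_def ncmul_mono ncone_mono mono_def)

end

definition lc1 :: "('k::comm_ring_1 \<times> gen list) list \<Rightarrow> 'k nc" where
  "lc1 M = (\<lambda>w. sum_list (map (\<lambda>(c, u). if u = w then c else 0) M))"

lemma lc1_Nil[simp]: "lc1 [] w = 0" by (simp add: lc1_def)
lemma lc1_Cons[simp]: "lc1 ((c, u) # M) w = (if u = w then c else 0) + lc1 M w" by (simp add: lc1_def)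
lemma lc1_append[simp]: "lc1 (M @ N) w = lc1 M w + lc1 N w" by (simp add: lc1_def)

lemma lc1_ncA[simp]: "lc1 M \<in> ncA"
proof (induction M)
  case Nil
  show ?case by (simp add: lc1_def ncA_def fin_supp_def)
next
  case (Cons a M)
  obtain c u where a: "a = (c, u)" by (cases a)
  have "lc1 (a # M) = ncadd (ncsmult c (mono u)) (lc1 M)"
    by (rule ext) (auto simp: a ncadd_def ncsmult_def mono_def)
  thus ?case using Cons by simp
qed

definition mulL :: "('k::comm_ring_1 \<times> gen list) list \<Rightarrow> ('k \<times> gen list) list \<Rightarrow> ('k \<times> gen list) list" where
  "mulL M N = concat (map (\<lambda>(a, v). map (\<lambda>(b, w). (a * b, v @ w)) N) M)"

lemma ncmul_add_left: "ncmul (\<lambda>w. p w + q w) r = (\<lambda>w. ncmul p r w + ncmul q r w)"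
  by (rule ext) (simp add: ncmul_def distrib_right sum.distrib)

lemma ncmul_add_right: "ncmul p (\<lambda>w. q w + r w) = (\<lambda>w. ncmul p q w + ncmul p r w)"
  by (rule ext) (simp add: ncmul_def distrib_left sum.distrib)

lemma ncmul_zero_left: "ncmul (\<lambda>w. 0) r = (\<lambda>w. 0)"
  by (rule ext) (simp add: ncmul_def)

lemma ncmul_zero_right: "ncmul p (\<lambda>w. 0) = (\<lambda>w. 0)"
  by (rule ext) (simp add: ncmul_def)

lemma ncmul_smult_left: "ncmul (\<lambda>w. c * p w) r = (\<lambda>w. c * ncmul p r w)"
  by (rule ext) (simp add: ncmul_def sum_distrib_left mult.assoc)

lemma ncmul_smult_right: "ncmul p (\<lambda>w. c * r w) = (\<lambda>w. c * ncmul p r w)"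
  by (rule ext) (simp add: ncmul_def sum_distrib_left mult_ac)

lemma lc1_Cons_fun: "lc1 ((c, u) # M) = (\<lambda>w. c * mono u w + lc1 M w)"
  by (rule ext) (simp add: mono_def)

lemma lc1_Nil_fun: "lc1 [] = (\<lambda>w. 0)"
  by (rule ext) simp

lemma ncmul_mono_lc1: "ncmul (mono v) (lc1 N) = lc1 (map (\<lambda>(b, w). (b, v @ w)) N)"
proof (induction N)
  case Nil thus ?case by (simp add: lc1_Nil_fun ncmul_zero_right)
next
  case (Cons a N)
  obtain b w where a: "a = (b, w)" by (cases a)
  show ?case by (simp add: a lc1_Cons_fun ncmul_add_right ncmul_smult_right ncmul_mono Cons)
qed

lemma ncmul_lc1: "ncmul (lc1 M) (lc1 N) = lc1 (mulL M N)"
proof (induction M)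
  case Nil thus ?case by (simp add: lc1_Nil_fun ncmul_zero_left mulL_def)
next
  case (Cons a M)
  obtain c v where a: "a = (c, v)" by (cases a)
  have "ncmul (lc1 (a # M)) (lc1 N) = (\<lambda>w. c * lc1 (map (\<lambda>(b, w). (b, v @ w)) N) w + lc1 (mulL M N) w)"
    by (simp add: a lc1_Cons_fun ncmul_add_left ncmul_smult_left ncmul_mono_lc1 Cons)
  also have "\<dots> = lc1 (mulL (a # M) N)"
  proof (rule ext)
    fix w
    have "c * lc1 (map (\<lambda>(b, w). (b, v @ w)) N) w = lc1 (map (\<lambda>(b, w). (c * b, v @ w)) N) w"
      by (induction N) (auto simp: algebra_simps)
    thus "c * lc1 (map (\<lambda>(b, w). (b, v @ w)) N) w + lc1 (mulL M N) w = lc1 (mulL (a # M) N) w"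
      by (simp add: mulL_def a)
  qed
  finally show ?case .
qed

fun WI :: "(gen \<Rightarrow> ('k::comm_ring_1 \<times> gen list) list) \<Rightarrow> gen list \<Rightarrow> ('k \<times> gen list) list" where
  "WI F [] = [(1, [])]"
| "WI F (x # u) = mulL (F x) (WI F u)"

lemma wimg_lc1: "wimg (\<lambda>x. lc1 (F x)) u = lc1 (WI F u)"
proof (induction u)
  case Nil show ?case by (rule ext) (simp add: ncone_def)
next
  case (Cons x u) thus ?case by (simp add: ncmul_lc1)
qed

definition lcprod :: "'k::comm_ring_1 \<Rightarrow> ('k \<times> gen list) list \<Rightarrow> ('k \<times> gen list) list \<Rightarrow> ('k \<times> gen list \<times> gen list) list" where
  "lcprod c M N = concat (map (\<lambda>(a, x). map (\<lambda>(b, y). (c * a * b, x, y)) N) M)"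

lemma lc_lcprod: "lc (lcprod c M N) (u, v) = c * lc1 M u * lc1 N v"
proof (induction M)
  case Nil thus ?case by (simp add: lcprod_def)
next
  case (Cons a M)
  obtain d x where a: "a = (d, x)" by (cases a)
  have "lc (map (\<lambda>(b, y). (c * d * b, x, y)) N) (u, v) = (if x = u then c * d * lc1 N v else 0)"
    by (induction N) (auto simp: algebra_simps)
  thus ?case using Cons by (simp add: lcprod_def a algebra_simps)
qed

definition TML :: "(gen \<Rightarrow> ('k::comm_ring_1 \<times> gen list) list) \<Rightarrow> ('k \<times> gen list \<times> gen list) list \<Rightarrow> ('k \<times> gen list \<times> gen list) list" where
  "TML F L = concat (map (\<lambda>(c, u, v). lcprod c (WI F u) (WI F v)) L)"

lemma tmap2_lc: "tmap2 (subst (\<lambda>x. lc1 (F x))) (lc L) = lc (TML F L)"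
proof (rule ext, clarify)
  fix u v
  let ?f = "\<lambda>x. lc1 (F x)"
  have "tmap2 (subst ?f) (lc L) (u, v) =
        (\<Sum>p\<in>spt (lc L). lc L p * (subst ?f (mono (fst p)) u * subst ?f (mono (snd p)) v))"
    unfolding tmap2_def by (simp only: mult.assoc split_conv)
  also have "\<dots> = sum_list (map (\<lambda>(c, a, b). c * (subst ?f (mono a) u * subst ?f (mono b) v)) L)"
    using sum_lc[where G="\<lambda>p. subst ?f (mono (fst p)) u * subst ?f (mono (snd p)) v" and L=L] by (simp add: split_def)
  also have "\<dots> = sum_list (map (\<lambda>(c, a, b). c * (lc1 (WI F a) u * lc1 (WI F b) v)) L)"
    by (simp only: subst_mono wimg_lc1)
  also have "\<dots> = lc (TML F L) (u, v)"
    by (induction L) (auto simp: TML_def lc_lcprod mult.assoc)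
  finally show "tmap2 (subst (\<lambda>x. lc1 (F x))) (lc L) (u, v) = lc (TML F L) (u, v)" .
qed

lemma lc_eqI:
  assumes "set (keys L1) \<subseteq> set K" "set (keys L2) \<subseteq> set K" "list_all (\<lambda>p. lc L1 p = lc L2 p) K"
  shows "lc L1 = lc L2"
proof
  fix p show "lc L1 p = lc L2 p"
  proof (cases "p \<in> set K")
    case True thus ?thesis using assms(3) by (simp add: list_all_iff)
  next
    case False
    hence "p \<notin> set (keys L1)" "p \<notin> set (keys L2)" using assms(1,2) by auto
    thus ?thesis by (simp add: lc_notkey)
  qed
qed

lemma lc1_aff: "lc1 [(1, [x]), (c, [])] = ncadd (mono [x]) (ncsmult c ncone)"
  by (rule ext) (auto simp: ncadd_def ncsmult_def mono_def ncone_def)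

lemma br_aff:
  assumes db: "is_double_bracket br"
  shows "br (lc1 [(1, [x]), (c, [])]) (lc1 [(1, [y]), (d, [])]) = br (mono [x]) (mono [y])"
proof -
  note D0 = db[unfolded is_double_bracket_def]
  have addL: "\<And>a b c. a \<in> ncA \<Longrightarrow> b \<in> ncA \<Longrightarrow> c \<in> ncA \<Longrightarrow> br (ncadd a b) c = ncadd (br a c) (br b c)"
   and addR: "\<And>a b c. a \<in> ncA \<Longrightarrow> b \<in> ncA \<Longrightarrow> c \<in> ncA \<Longrightarrow> br a (ncadd b c) = ncadd (br a b) (br a c)"
   and smL: "\<And>x a b. a \<in> ncA \<Longrightarrow> b \<in> ncA \<Longrightarrow> br (ncsmult x a) b = ncsmult x (br a b)"
   and smR: "\<And>x a b. a \<in> ncA \<Longrightarrow> b \<in> ncA \<Longrightarrow> br a (ncsmult x b) = ncsmult x (br a b)"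
    using D0 by blast+
  have z1: "\<And>a. a \<in> ncA \<Longrightarrow> br a ncone = (\<lambda>x. 0)" by (rule db_one_right[OF db])
  have z2: "\<And>a. a \<in> ncA \<Longrightarrow> br ncone a = (\<lambda>x. 0)" by (rule db_one_left[OF db])
  show ?thesis unfolding lc1_aff
    by (simp add: addL addR smL smR z1 z2) (simp add: ncadd_def ncsmult_def)
qed

lemma subst_lc1:
  "subst f (lc1 M) = (\<lambda>w. sum_list (map (\<lambda>(a, u). a * wimg f u w) M))"
proof (induction M)
  case Nil
  show ?case by (simp add: subst_def lc1_def)
next
  case (Cons a M)
  obtain c u where a: "a = (c, u)" by (cases a)
  have "lc1 (a # M) = ncadd (ncsmult c (mono u)) (lc1 M)"
    by (rule ext) (auto simp: a ncadd_def ncsmult_def mono_def)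
  hence h: "subst f (lc1 (a # M)) = ncadd (ncsmult c (wimg f u)) (subst f (lc1 M))"
    by (simp add: subst_add subst_smult)
  show ?case unfolding h Cons.IH by (rule ext) (simp add: a ncadd_def ncsmult_def)
qed

text \<open>Translation automorphisms, optionally composed with the swap of the generators.\<close>

fun sw :: "bool \<Rightarrow> gen \<Rightarrow> gen" where
  "sw b T = (if b then S else T)" | "sw b S = (if b then T else S)"

lemma sw_sw[simp]: "sw b (sw b x) = x"
  by (cases x; cases b) auto

definition FI :: "bool \<Rightarrow> 'k::field \<Rightarrow> 'k \<Rightarrow> gen \<Rightarrow> ('k \<times> gen list) list" where
  "FI b p q x = [(1, [sw b x]), (- (if x = T then p else q), [])]"

definition GI :: "bool \<Rightarrow> 'k::field \<Rightarrow> 'k \<Rightarrow> gen \<Rightarrow> ('k \<times> gen list) list" where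
  "GI b p q x = [(1, [sw b x]), ((if sw b x = T then p else q), [])]"

lemma inv_pair_FG: "inv_pair (\<lambda>x. lc1 (FI b p q x)) (\<lambda>x. lc1 (GI b p q x))"
proof
  show "gens_ok (\<lambda>x. lc1 (FI b p q x))" "gens_ok (\<lambda>x. lc1 (GI b p q x))" by (auto simp: gens_ok_def)
  fix x
  show "subst (\<lambda>x. lc1 (FI b p q x)) (lc1 (GI b p q x)) = mono [x]"
    by (rule ext) (cases x; cases b; auto simp: subst_lc1 wimg_lc1 GI_def FI_def mulL_def mono_def)
  show "subst (\<lambda>x. lc1 (GI b p q x)) (lc1 (FI b p q x)) = mono [x]"
    by (rule ext) (cases x; cases b; auto simp: subst_lc1 wimg_lc1 GI_def FI_def mulL_def mono_def)
qed

lemma transp_gen: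
  assumes db: "is_double_bracket br"
  shows "transp (\<lambda>x. lc1 (FI b p q x)) (\<lambda>x. lc1 (GI b p q x)) br (mono [x]) (mono [y])
       = tmap2 (subst (\<lambda>x. lc1 (FI b p q x))) (br (mono [sw b x]) (mono [sw b y]))"
proof -
  have "subst (\<lambda>x. lc1 (GI b p q x)) (mono [z]) = lc1 [(1, [sw b z]), ((if sw b z = T then p else q), [])]" for z
    by (simp add: GI_def ncmul_one_right)
  thus ?thesis unfolding transp_def by (simp add: br_aff[OF db])
qed

definition "KT x = [([], []), ([x], []), ([], [x]), ([x,x], []), ([x], [x]), ([], [x,x]),
   ([x,x,x], []), ([x,x], [x]), ([x], [x,x]), ([], [x,x,x])]"

definition "K2 = [([], []), ([T], []), ([S], []), ([], [T]), ([], [S]), ([T,T], []), ([T,S], []), ([S,T], []),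
   ([S,S], []), ([T], [T]), ([T], [S]), ([S], [T]), ([S], [S]), ([], [T,T]), ([], [T,S]), ([], [S,T]), ([], [S,S])]"

context hyps begin

lemma tt_shift:
  "lc (TML (FI b p q) ttL) = lc (map (\<lambda>(c, u, v). (c, map (sw b) u, map (sw b) v))
     [(lam - 2*p*\<mu> + p^2*\<nu>, [T], []), (-(lam - 2*p*\<mu> + p^2*\<nu>), [], [T]),
      (\<mu> - p*\<nu>, [T,T], []), (-(\<mu> - p*\<nu>), [], [T,T]), (\<nu>, [T,T], [T]), (-\<nu>, [T], [T,T])])"
  by (rule lc_eqI[where K="map (\<lambda>(u, v). (map (sw b) u, map (sw b) v)) (KT T)"])
     (cases b; simp add: TML_def ttL_def FI_def lcprod_def mulL_def keys_def KT_def; simp add: algebra_simps power2_eq_square)+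

lemma ss_shift:
  "lc (TML (FI b p q) ssL) = lc (map (\<lambda>(c, u, v). (c, map (sw b) u, map (sw b) v))
     [(l - 2*q*m + q^2*n, [S], []), (-(l - 2*q*m + q^2*n), [], [S]),
      (m - q*n, [S,S], []), (-(m - q*n), [], [S,S]), (n, [S,S], [S]), (-n, [S], [S,S])])"
  by (rule lc_eqI[where K="map (\<lambda>(u, v). (map (sw b) u, map (sw b) v)) (KT S)"])
     (cases b; simp add: TML_def ssL_def FI_def lcprod_def mulL_def keys_def KT_def; simp add: algebra_simps power2_eq_square)+

lemma ts_shift_id:
  assumes "\<alpha>0 = 0" "\<alpha>0' = 0" "\<beta>0 = 0" "\<beta>0' = 0" "\<alpha>1 = 0" "\<alpha>3' = 0"
    "\<beta>1 = \<gamma>0*p + (\<alpha>1' + \<alpha>2)*q" "\<beta>1' = \<gamma>0*p + (\<alpha>2' + \<alpha>3)*q"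
    "\<beta>2 = \<gamma>1*q + (\<alpha>1' + \<alpha>2')*p" "\<beta>2' = \<gamma>1*q + (\<alpha>2 + \<alpha>3)*p"
    "\<gamma> = gN + \<gamma>0*p^2 + \<gamma>1*q^2 + (\<alpha>1' + \<alpha>2 + \<alpha>2' + \<alpha>3)*p*q"
  shows "lc (TML (FI False p q) tsL) = lc [(\<gamma>0, [T], [T]), (\<gamma>1, [S], [S]), (\<alpha>1', [S,T], []),
     (\<alpha>2, [T], [S]), (\<alpha>2', [S], [T]), (\<alpha>3, [], [T,S]), (gN, [], [])]"
  apply (rule lc_eqI[where K="K2"])
    apply (simp_all only: tsL_def)
    apply (simp_all add: assms TML_def FI_def lcprod_def mulL_def keys_def K2_def)
  apply (simp_all add: algebra_simps power2_eq_square)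
  done

lemma ts_shift_sw:
  assumes "\<alpha>0 = 0" "\<alpha>0' = 0" "\<beta>0 = 0" "\<beta>0' = 0" "\<alpha>1 = 0" "\<alpha>3' = 0"
    "\<beta>1 = \<gamma>0*p + (\<alpha>1' + \<alpha>2)*q" "\<beta>1' = \<gamma>0*p + (\<alpha>2' + \<alpha>3)*q"
    "\<beta>2 = \<gamma>1*q + (\<alpha>1' + \<alpha>2')*p" "\<beta>2' = \<gamma>1*q + (\<alpha>2 + \<alpha>3)*p"
    "\<gamma> = gN + \<gamma>0*p^2 + \<gamma>1*q^2 + (\<alpha>1' + \<alpha>2 + \<alpha>2' + \<alpha>3)*p*q"
  shows "lc (TML (FI True p q) (negswap tsL)) = lc [(-\<gamma>1, [T], [T]), (-\<gamma>0, [S], [S]), (-\<alpha>3, [S,T], []),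
     (-\<alpha>2, [T], [S]), (-\<alpha>2', [S], [T]), (-\<alpha>1', [], [T,S]), (-gN, [], [])]"
  apply (rule lc_eqI[where K="K2"])
    apply (simp_all only: tsL_def)
    apply (simp_all add: assms TML_def negswap_def FI_def lcprod_def mulL_def keys_def K2_def)
  apply (simp_all add: algebra_simps power2_eq_square)
  done

end

lemma mono_eval: "mono u w = (if w = u then 1 else 0)" by (simp add: mono_def)

context hyps begin

lemma z0: "\<alpha>0 = 0"
  using EX[where a=S and b=S and c=T and x="[]" and y="[]" and z="[T,T,T]"]
  by (simp add: ttL_def ssL_def tsL_def negswap_def qp_rhs_def tens3_def ncmul_mono ncone_mono mono_eval)

lemma z1: "\<alpha>0' = 0"
  using EX[where a=S and b=S and c=T and x="[T,T,T]" and y="[]" and z="[]"]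
  by (simp add: ttL_def ssL_def tsL_def negswap_def qp_rhs_def tens3_def ncmul_mono ncone_mono mono_eval)

lemma z2: "\<alpha>1 = 0"
  using EX[where a=S and b=T and c=T and x="[]" and y="[T,T,S]" and z="[]"]
  by (simp add: ttL_def ssL_def tsL_def negswap_def qp_rhs_def tens3_def ncmul_mono ncone_mono mono_eval)

lemma z3: "\<alpha>3' = 0"
  using EX[where a=S and b=S and c=T and x="[S,S,T]" and y="[]" and z="[]"]
  by (simp add: ttL_def ssL_def tsL_def negswap_def qp_rhs_def tens3_def ncmul_mono ncone_mono mono_eval)

lemma z4: "\<beta>0 = 0"
  using EX[where a=S and b=T and c=T and x="[]" and y="[S,S,S]" and z="[]"]
  by (simp add: ttL_def ssL_def tsL_def negswap_def qp_rhs_def tens3_def ncmul_mono ncone_mono mono_eval)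

lemma z5: "\<beta>0' = 0"
  using EX[where a=S and b=T and c=T and x="[S,S,S]" and y="[]" and z="[]"]
  by (simp add: ttL_def ssL_def tsL_def negswap_def qp_rhs_def tens3_def ncmul_mono ncone_mono mono_eval)

lemmas zs = z0 z1 z2 z3 z4 z5

lemma r0: "1 * \<gamma>1 * n = 0"
  using EX[where a=S and b=S and c=T and x="[S]" and y="[S,S]" and z="[S]"]
  by (simp add: ttL_def ssL_def tsL_def negswap_def qp_rhs_def tens3_def ncmul_mono ncone_mono mono_eval del: mult_eq_0_iff, (use zs in algebra)?)

lemma r1: "1 * \<gamma>0 * n = 0"
  using EX[where a=S and b=S and c=T and x="[T]" and y="[S]" and z="[S,T]"]
  by (simp add: ttL_def ssL_def tsL_def negswap_def qp_rhs_def tens3_def ncmul_mono ncone_mono mono_eval del: mult_eq_0_iff, (use zs in algebra)?)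

lemma r2: "1 * \<gamma>1 * \<nu> = 0"
  using EX[where a=S and b=T and c=T and x="[S]" and y="[S]" and z="[T,T]"]
  by (simp add: ttL_def ssL_def tsL_def negswap_def qp_rhs_def tens3_def ncmul_mono ncone_mono mono_eval del: mult_eq_0_iff, (use zs in algebra)?)

lemma r3: "(-1) * \<gamma>0 * \<nu> = 0"
  using EX[where a=S and b=T and c=T and x="[T]" and y="[T]" and z="[T,T]"]
  by (simp add: ttL_def ssL_def tsL_def negswap_def qp_rhs_def tens3_def ncmul_mono ncone_mono mono_eval del: mult_eq_0_iff, (use zs in algebra)?)

lemma r4: "1 * \<alpha>1' * n + 1 * \<alpha>2 * n = 0"
  using EX[where a=S and b=S and c=T and x="[S]" and y="[S]" and z="[S,T]"]
  by (simp add: ttL_def ssL_def tsL_def negswap_def qp_rhs_def tens3_def ncmul_mono ncone_mono mono_eval del: mult_eq_0_iff, (use zs in algebra)?)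

lemma r5: "1 * \<alpha>3 * \<gamma>1 + 1 * \<gamma>1 * m = 0"
  using EX[where a=S and b=S and c=T and x="[S]" and y="[S,S]" and z="[]"]
  by (simp add: ttL_def ssL_def tsL_def negswap_def qp_rhs_def tens3_def ncmul_mono ncone_mono mono_eval del: mult_eq_0_iff, (use zs in algebra)?)

lemma r6: "1 * \<alpha>3 * \<gamma>0 + 1 * \<gamma>0 * m = 0"
  using EX[where a=S and b=S and c=T and x="[T,S]" and y="[]" and z="[T]"]
  by (simp add: ttL_def ssL_def tsL_def negswap_def qp_rhs_def tens3_def ncmul_mono ncone_mono mono_eval del: mult_eq_0_iff, (use zs in algebra)?)

lemma r7: "1 * \<alpha>2' * n + 1 * \<alpha>3 * n = 0"
  using EX[where a=S and b=S and c=T and x="[T,S]" and y="[S]" and z="[S]"]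
  by (simp add: ttL_def ssL_def tsL_def negswap_def qp_rhs_def tens3_def ncmul_mono ncone_mono mono_eval del: mult_eq_0_iff, (use zs in algebra)?)

lemma r8: "(-1) * \<alpha>1' * \<beta>1 + 1 * \<beta>1 * m = 0"
  using EX[where a=S and b=S and c=T and x="[]" and y="[]" and z="[S,T]"]
  by (simp add: ttL_def ssL_def tsL_def negswap_def qp_rhs_def tens3_def ncmul_mono ncone_mono mono_eval del: mult_eq_0_iff, (use zs in algebra)?)

lemma r9: "(-1) * \<alpha>1' * \<gamma>1 + 1 * \<gamma>1 * m = 0"
  using EX[where a=S and b=S and c=T and x="[]" and y="[S,S]" and z="[S]"]
  by (simp add: ttL_def ssL_def tsL_def negswap_def qp_rhs_def tens3_def ncmul_mono ncone_mono mono_eval del: mult_eq_0_iff, (use zs in algebra)?)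

lemma r10: "(-1) * \<alpha>1' * \<gamma>0 + 1 * \<gamma>0 * m = 0"
  using EX[where a=S and b=S and c=T and x="[T]" and y="[]" and z="[S,T]"]
  by (simp add: ttL_def ssL_def tsL_def negswap_def qp_rhs_def tens3_def ncmul_mono ncone_mono mono_eval del: mult_eq_0_iff, (use zs in algebra)?)

lemma r11: "1 * \<alpha>3 * \<beta>1' + 1 * \<beta>1' * m = 0"
  using EX[where a=S and b=S and c=T and x="[T,S]" and y="[]" and z="[]"]
  by (simp add: ttL_def ssL_def tsL_def negswap_def qp_rhs_def tens3_def ncmul_mono ncone_mono mono_eval del: mult_eq_0_iff, (use zs in algebra)?)

lemma r12: "(-1) * \<alpha>2 * \<gamma>0 + 1 * \<alpha>2' * \<gamma>0 = 0"
  using EX[where a=S and b=S and c=T and x="[T]" and y="[S]" and z="[T]"]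
  by (simp add: ttL_def ssL_def tsL_def negswap_def qp_rhs_def tens3_def ncmul_mono ncone_mono mono_eval del: mult_eq_0_iff, (use zs in algebra)?)

lemma r13: "1 * \<alpha>1' * \<beta>2 + (-1) * \<beta>2 * \<mu> = 0"
  using EX[where a=S and b=T and c=T and x="[]" and y="[S,T]" and z="[]"]
  by (simp add: ttL_def ssL_def tsL_def negswap_def qp_rhs_def tens3_def ncmul_mono ncone_mono mono_eval del: mult_eq_0_iff, (use zs in algebra)?)

lemma r14: "1 * \<alpha>1' * \<gamma>0 + (-1) * \<gamma>0 * \<mu> = 0"
  using EX[where a=S and b=T and c=T and x="[]" and y="[T]" and z="[T,T]"]
  by (simp add: ttL_def ssL_def tsL_def negswap_def qp_rhs_def tens3_def ncmul_mono ncone_mono mono_eval del: mult_eq_0_iff, (use zs in algebra)?)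

lemma r15: "(-1) * \<alpha>2 * \<gamma>1 + 1 * \<alpha>2' * \<gamma>1 = 0"
  using EX[where a=S and b=T and c=T and x="[S]" and y="[S]" and z="[T]"]
  by (simp add: ttL_def ssL_def tsL_def negswap_def qp_rhs_def tens3_def ncmul_mono ncone_mono mono_eval del: mult_eq_0_iff, (use zs in algebra)?)

lemma r16: "1 * \<alpha>1' * \<gamma>1 + (-1) * \<gamma>1 * \<mu> = 0"
  using EX[where a=S and b=T and c=T and x="[S]" and y="[S,T]" and z="[]"]
  by (simp add: ttL_def ssL_def tsL_def negswap_def qp_rhs_def tens3_def ncmul_mono ncone_mono mono_eval del: mult_eq_0_iff, (use zs in algebra)?)

lemma r17: "(-1) * \<alpha>3 * \<gamma>0 + (-1) * \<gamma>0 * \<mu> = 0"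
  using EX[where a=S and b=T and c=T and x="[T]" and y="[]" and z="[T,T]"]
  by (simp add: ttL_def ssL_def tsL_def negswap_def qp_rhs_def tens3_def ncmul_mono ncone_mono mono_eval del: mult_eq_0_iff, (use zs in algebra)?)

lemma r18: "(-1) * \<alpha>3 * \<gamma>1 + (-1) * \<gamma>1 * \<mu> = 0"
  using EX[where a=S and b=T and c=T and x="[T,S]" and y="[S]" and z="[]"]
  by (simp add: ttL_def ssL_def tsL_def negswap_def qp_rhs_def tens3_def ncmul_mono ncone_mono mono_eval del: mult_eq_0_iff, (use zs in algebra)?)

lemma r19: "(-1) * \<alpha>2 * \<nu> + (-1) * \<alpha>3 * \<nu> = 0"
  using EX[where a=S and b=T and c=T and x="[T,S]" and y="[T]" and z="[T]"]
  by (simp add: ttL_def ssL_def tsL_def negswap_def qp_rhs_def tens3_def ncmul_mono ncone_mono mono_eval del: mult_eq_0_iff, (use zs in algebra)?)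

lemma r20: "1/4 + 1 * l * n + (-1) * m^2 = 0"
  using EX[where a=S and b=S and c=S and x="[]" and y="[S]" and z="[S,S]"]
  by (simp add: ttL_def ssL_def tsL_def negswap_def qp_rhs_def tens3_def ncmul_mono ncone_mono mono_eval del: mult_eq_0_iff, (use zs in algebra)?)

lemma r21: "(-1) * \<alpha>1' * \<nu> + (-1) * \<alpha>2' * \<nu> = 0"
  using EX[where a=S and b=T and c=T and x="[T]" and y="[S,T]" and z="[T]"]
  by (simp add: ttL_def ssL_def tsL_def negswap_def qp_rhs_def tens3_def ncmul_mono ncone_mono mono_eval del: mult_eq_0_iff, (use zs in algebra)?)

lemma r22: "(-1) * \<alpha>3 * \<beta>2' + (-1) * \<beta>2' * \<mu> = 0"
  using EX[where a=S and b=T and c=T and x="[T,S]" and y="[]" and z="[]"]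
  by (simp add: ttL_def ssL_def tsL_def negswap_def qp_rhs_def tens3_def ncmul_mono ncone_mono mono_eval del: mult_eq_0_iff, (use zs in algebra)?)

lemma r23: "1/4 + (-1) * \<alpha>1'^2 + 1 * \<beta>1 * n = 0"
  using EX[where a=S and b=S and c=T and x="[]" and y="[S]" and z="[S,T]"]
  by (simp add: ttL_def ssL_def tsL_def negswap_def qp_rhs_def tens3_def ncmul_mono ncone_mono mono_eval del: mult_eq_0_iff, (use zs in algebra)?)

lemma r24: "(-1/4) + 1 * \<alpha>3^2 + 1 * \<beta>1' * n = 0"
  using EX[where a=S and b=S and c=T and x="[T,S]" and y="[S]" and z="[]"]
  by (simp add: ttL_def ssL_def tsL_def negswap_def qp_rhs_def tens3_def ncmul_mono ncone_mono mono_eval del: mult_eq_0_iff, (use zs in algebra)?)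

lemma r25: "1/4 + 1 * lam * \<nu> + (-1) * \<mu>^2 = 0"
  using EX[where a=T and b=T and c=T and x="[]" and y="[T]" and z="[T,T]"]
  by (simp add: ttL_def ssL_def tsL_def negswap_def qp_rhs_def tens3_def ncmul_mono ncone_mono mono_eval del: mult_eq_0_iff, (use zs in algebra)?)

lemma r26: "(-1) * \<beta>1 * \<gamma> + 1 * \<beta>1' * \<gamma> + 1 * \<gamma> * l = 0"
  using EX[where a=S and b=S and c=T and x="[]" and y="[]" and z="[]"]
  by (simp add: ttL_def ssL_def tsL_def negswap_def qp_rhs_def tens3_def ncmul_mono ncone_mono mono_eval del: mult_eq_0_iff, (use zs in algebra)?)

lemma r27: "1 * \<beta>1 * l + (-1) * \<beta>1^2 + 1 * \<gamma> * \<gamma>0 = 0"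
  using EX[where a=S and b=S and c=T and x="[]" and y="[]" and z="[T]"]
  by (simp add: ttL_def ssL_def tsL_def negswap_def qp_rhs_def tens3_def ncmul_mono ncone_mono mono_eval del: mult_eq_0_iff, (use zs in algebra)?)

lemma r28: "(-1/4) + 1 * \<alpha>1'^2 + (-1) * \<beta>2 * \<nu> = 0"
  using EX[where a=S and b=T and c=T and x="[]" and y="[S,T]" and z="[T]"]
  by (simp add: ttL_def ssL_def tsL_def negswap_def qp_rhs_def tens3_def ncmul_mono ncone_mono mono_eval del: mult_eq_0_iff, (use zs in algebra)?)

lemma r29: "1/4 + (-1) * \<alpha>3^2 + (-1) * \<beta>2' * \<nu> = 0"
  using EX[where a=S and b=T and c=T and x="[T,S]" and y="[]" and z="[T]"]
  by (simp add: ttL_def ssL_def tsL_def negswap_def qp_rhs_def tens3_def ncmul_mono ncone_mono mono_eval del: mult_eq_0_iff, (use zs in algebra)?)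

lemma r30: "1 * \<alpha>2' * \<gamma> + (-1) * \<beta>1 * \<beta>2 + 1 * \<gamma> * m = 0"
  using EX[where a=S and b=S and c=T and x="[]" and y="[]" and z="[S]"]
  by (simp add: ttL_def ssL_def tsL_def negswap_def qp_rhs_def tens3_def ncmul_mono ncone_mono mono_eval del: mult_eq_0_iff, (use zs in algebra)?)

lemma r31: "(-1) * \<alpha>2 * \<gamma> + 1 * \<beta>1' * \<beta>2' + 1 * \<gamma> * m = 0"
  using EX[where a=S and b=S and c=T and x="[S]" and y="[]" and z="[]"]
  by (simp add: ttL_def ssL_def tsL_def negswap_def qp_rhs_def tens3_def ncmul_mono ncone_mono mono_eval del: mult_eq_0_iff, (use zs in algebra)?)

lemma r32: "1 * \<beta>1' * l + 1 * \<beta>1'^2 + (-1) * \<gamma> * \<gamma>0 = 0"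
  using EX[where a=S and b=S and c=T and x="[T]" and y="[]" and z="[]"]
  by (simp add: ttL_def ssL_def tsL_def negswap_def qp_rhs_def tens3_def ncmul_mono ncone_mono mono_eval del: mult_eq_0_iff, (use zs in algebra)?)

lemma r33: "(-1) * \<alpha>2 * \<gamma> + 1 * \<beta>1 * \<beta>2 + (-1) * \<gamma> * \<mu> = 0"
  using EX[where a=S and b=T and c=T and x="[]" and y="[T]" and z="[]"]
  by (simp add: ttL_def ssL_def tsL_def negswap_def qp_rhs_def tens3_def ncmul_mono ncone_mono mono_eval del: mult_eq_0_iff, (use zs in algebra)?)

lemma r34: "(-1) * \<alpha>2 * \<beta>1 + 1 * \<beta>1 * m + 1 * \<beta>2' * \<gamma>0 = 0"
  using EX[where a=S and b=S and c=T and x="[S]" and y="[]" and z="[T]"]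
  by (simp add: ttL_def ssL_def tsL_def negswap_def qp_rhs_def tens3_def ncmul_mono ncone_mono mono_eval del: mult_eq_0_iff, (use zs in algebra)?)

lemma r35: "(-1) * \<beta>1 * \<gamma>0 + 1 * \<beta>1' * \<gamma>0 + 1 * \<gamma>0 * l = 0"
  using EX[where a=S and b=S and c=T and x="[T]" and y="[]" and z="[T]"]
  by (simp add: ttL_def ssL_def tsL_def negswap_def qp_rhs_def tens3_def ncmul_mono ncone_mono mono_eval del: mult_eq_0_iff, (use zs in algebra)?)

lemma r36: "1 * \<beta>2 * \<gamma> + (-1) * \<beta>2' * \<gamma> + (-1) * \<gamma> * lam = 0"
  using EX[where a=S and b=T and c=T and x="[]" and y="[]" and z="[]"]
  by (simp add: ttL_def ssL_def tsL_def negswap_def qp_rhs_def tens3_def ncmul_mono ncone_mono mono_eval del: mult_eq_0_iff, (use zs in algebra)?)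

lemma r37: "(-1) * \<beta>2 * lam + 1 * \<beta>2^2 + (-1) * \<gamma> * \<gamma>1 = 0"
  using EX[where a=S and b=T and c=T and x="[]" and y="[S]" and z="[]"]
  by (simp add: ttL_def ssL_def tsL_def negswap_def qp_rhs_def tens3_def ncmul_mono ncone_mono mono_eval del: mult_eq_0_iff, (use zs in algebra)?)

lemma r38: "1 * \<alpha>2' * \<beta>1' + 1 * \<beta>1' * m + (-1) * \<beta>2 * \<gamma>0 = 0"
  using EX[where a=S and b=S and c=T and x="[T]" and y="[]" and z="[S]"]
  by (simp add: ttL_def ssL_def tsL_def negswap_def qp_rhs_def tens3_def ncmul_mono ncone_mono mono_eval del: mult_eq_0_iff, (use zs in algebra)?)

lemma r39: "(-1) * \<beta>2' * lam + (-1) * \<beta>2'^2 + 1 * \<gamma> * \<gamma>1 = 0"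
  using EX[where a=S and b=T and c=T and x="[S]" and y="[]" and z="[]"]
  by (simp add: ttL_def ssL_def tsL_def negswap_def qp_rhs_def tens3_def ncmul_mono ncone_mono mono_eval del: mult_eq_0_iff, (use zs in algebra)?)

lemma r40: "1 * \<alpha>2' * \<gamma> + (-1) * \<beta>1' * \<beta>2' + (-1) * \<gamma> * \<mu> = 0"
  using EX[where a=S and b=T and c=T and x="[T]" and y="[]" and z="[]"]
  by (simp add: ttL_def ssL_def tsL_def negswap_def qp_rhs_def tens3_def ncmul_mono ncone_mono mono_eval del: mult_eq_0_iff, (use zs in algebra)?)

lemma r41: "1 * \<beta>2 * \<gamma>1 + (-1) * \<beta>2' * \<gamma>1 + (-1) * \<gamma>1 * lam = 0"
  using EX[where a=S and b=T and c=T and x="[S]" and y="[S]" and z="[]"]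
  by (simp add: ttL_def ssL_def tsL_def negswap_def qp_rhs_def tens3_def ncmul_mono ncone_mono mono_eval del: mult_eq_0_iff, (use zs in algebra)?)

lemma r42: "(-1) * \<alpha>2 * \<beta>2' + 1 * \<beta>1 * \<gamma>1 + (-1) * \<beta>2' * \<mu> = 0"
  using EX[where a=S and b=T and c=T and x="[S]" and y="[T]" and z="[]"]
  by (simp add: ttL_def ssL_def tsL_def negswap_def qp_rhs_def tens3_def ncmul_mono ncone_mono mono_eval del: mult_eq_0_iff, (use zs in algebra)?)

lemma r43: "1 * \<alpha>2' * \<beta>2 + (-1) * \<beta>1' * \<gamma>1 + (-1) * \<beta>2 * \<mu> = 0"
  using EX[where a=S and b=T and c=T and x="[T]" and y="[S]" and z="[]"]
  by (simp add: ttL_def ssL_def tsL_def negswap_def qp_rhs_def tens3_def ncmul_mono ncone_mono mono_eval del: mult_eq_0_iff, (use zs in algebra)?)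

lemma r44: "1/4 + (-1) * \<alpha>2^2 + 1 * \<beta>1 * n + 1 * \<gamma>0 * \<gamma>1 = 0"
  using EX[where a=S and b=S and c=T and x="[S]" and y="[S]" and z="[T]"]
  by (simp add: ttL_def ssL_def tsL_def negswap_def qp_rhs_def tens3_def ncmul_mono ncone_mono mono_eval del: mult_eq_0_iff, (use zs in algebra)?)

lemma r45: "1/4 + 1 * \<alpha>2' * \<alpha>3 + 1 * \<alpha>2' * m + 1 * \<alpha>3 * m = 0"
  using EX[where a=S and b=S and c=T and x="[T,S]" and y="[]" and z="[S]"]
  by (simp add: ttL_def ssL_def tsL_def negswap_def qp_rhs_def tens3_def ncmul_mono ncone_mono mono_eval del: mult_eq_0_iff, (use zs in algebra)?)

lemma r46: "(-1/4) + (-1) * \<alpha>1' * \<alpha>2 + 1 * \<alpha>1' * m + 1 * \<alpha>2 * m = 0"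
  using EX[where a=S and b=S and c=T and x="[S]" and y="[]" and z="[S,T]"]
  by (simp add: ttL_def ssL_def tsL_def negswap_def qp_rhs_def tens3_def ncmul_mono ncone_mono mono_eval del: mult_eq_0_iff, (use zs in algebra)?)

lemma r47: "(-1/4) + 1 * \<alpha>2'^2 + 1 * \<beta>1' * n + (-1) * \<gamma>0 * \<gamma>1 = 0"
  using EX[where a=S and b=S and c=T and x="[T]" and y="[S]" and z="[S]"]
  by (simp add: ttL_def ssL_def tsL_def negswap_def qp_rhs_def tens3_def ncmul_mono ncone_mono mono_eval del: mult_eq_0_iff, (use zs in algebra)?)

lemma r48: "1/4 + (-1) * \<alpha>2^2 + (-1) * \<beta>2' * \<nu> + 1 * \<gamma>0 * \<gamma>1 = 0"
  using EX[where a=S and b=T and c=T and x="[S]" and y="[T]" and z="[T]"]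
  by (simp add: ttL_def ssL_def tsL_def negswap_def qp_rhs_def tens3_def ncmul_mono ncone_mono mono_eval del: mult_eq_0_iff, (use zs in algebra)?)

lemma r49: "(-1/4) + 1 * \<alpha>2'^2 + (-1) * \<beta>2 * \<nu> + (-1) * \<gamma>0 * \<gamma>1 = 0"
  using EX[where a=S and b=T and c=T and x="[T]" and y="[S]" and z="[T]"]
  by (simp add: ttL_def ssL_def tsL_def negswap_def qp_rhs_def tens3_def ncmul_mono ncone_mono mono_eval del: mult_eq_0_iff, (use zs in algebra)?)

lemma r50: "(-1/4) + (-1) * \<alpha>2 * \<alpha>3 + (-1) * \<alpha>2 * \<mu> + (-1) * \<alpha>3 * \<mu> = 0"
  using EX[where a=S and b=T and c=T and x="[T,S]" and y="[T]" and z="[]"]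
  by (simp add: ttL_def ssL_def tsL_def negswap_def qp_rhs_def tens3_def ncmul_mono ncone_mono mono_eval del: mult_eq_0_iff, (use zs in algebra)?)

lemma r51: "(-1) * \<alpha>2 * \<gamma>1 + 1 * \<alpha>2' * \<gamma>1 + 1 * \<beta>2 * n + 1 * \<beta>2' * n = 0"
  using EX[where a=S and b=S and c=T and x="[S]" and y="[S]" and z="[S]"]
  by (simp add: ttL_def ssL_def tsL_def negswap_def qp_rhs_def tens3_def ncmul_mono ncone_mono mono_eval del: mult_eq_0_iff, (use zs in algebra)?)

lemma r52: "1/4 + 1 * \<alpha>1' * \<alpha>2' + (-1) * \<alpha>1' * \<mu> + (-1) * \<alpha>2' * \<mu> = 0"
  using EX[where a=S and b=T and c=T and x="[T]" and y="[S,T]" and z="[]"]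
  by (simp add: ttL_def ssL_def tsL_def negswap_def qp_rhs_def tens3_def ncmul_mono ncone_mono mono_eval del: mult_eq_0_iff, (use zs in algebra)?)

lemma r53: "(-1) * \<alpha>2 * \<gamma>0 + 1 * \<alpha>2' * \<gamma>0 + (-1) * \<beta>1 * \<nu> + (-1) * \<beta>1' * \<nu> = 0"
  using EX[where a=S and b=T and c=T and x="[T]" and y="[T]" and z="[T]"]
  by (simp add: ttL_def ssL_def tsL_def negswap_def qp_rhs_def tens3_def ncmul_mono ncone_mono mono_eval del: mult_eq_0_iff, (use zs in algebra)?)

lemma r54: "1/4 + 1 * \<alpha>2' * \<alpha>3 + 1 * \<alpha>2' * m + 1 * \<alpha>3 * m + (-1) * \<beta>1' * n = 0"
  using EX[where a=S and b=S and c=T and x="[T]" and y="[S,S]" and z="[]"]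
  by (simp add: ttL_def ssL_def tsL_def negswap_def qp_rhs_def tens3_def ncmul_mono ncone_mono mono_eval del: mult_eq_0_iff, (use zs in algebra)?)

lemma r55: "(-1/4) + (-1) * \<alpha>1' * \<alpha>2 + 1 * \<alpha>1' * m + 1 * \<alpha>2 * m + (-1) * \<beta>1 * n = 0"
  using EX[where a=S and b=S and c=T and x="[]" and y="[S,S]" and z="[T]"]
  by (simp add: ttL_def ssL_def tsL_def negswap_def qp_rhs_def tens3_def ncmul_mono ncone_mono mono_eval del: mult_eq_0_iff, (use zs in algebra)?)

lemma r56: "(-1) * \<alpha>1' * \<beta>2 + 1 * \<alpha>2' * \<beta>2 + (-1) * \<beta>1 * \<gamma>1 + 1 * \<gamma> * n + 1 * \<gamma>1 * l = 0"
  using EX[where a=S and b=S and c=T and x="[]" and y="[S]" and z="[S]"]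
  by (simp add: ttL_def ssL_def tsL_def negswap_def qp_rhs_def tens3_def ncmul_mono ncone_mono mono_eval del: mult_eq_0_iff, (use zs in algebra)?)

lemma r57: "(-1) * \<alpha>1' * \<beta>2' + 1 * \<alpha>3 * \<beta>2 + 1 * \<beta>2 * m + 1 * \<beta>2' * m + (-1) * \<gamma> * n = 0"
  using EX[where a=S and b=S and c=T and x="[]" and y="[S,S]" and z="[]"]
  by (simp add: ttL_def ssL_def tsL_def negswap_def qp_rhs_def tens3_def ncmul_mono ncone_mono mono_eval del: mult_eq_0_iff, (use zs in algebra)?)

lemma r58: "(-1) * \<alpha>2 * \<beta>2' + 1 * \<alpha>3 * \<beta>2' + 1 * \<beta>1' * \<gamma>1 + 1 * \<gamma> * n + 1 * \<gamma>1 * l = 0"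
  using EX[where a=S and b=S and c=T and x="[S]" and y="[S]" and z="[]"]
  by (simp add: ttL_def ssL_def tsL_def negswap_def qp_rhs_def tens3_def ncmul_mono ncone_mono mono_eval del: mult_eq_0_iff, (use zs in algebra)?)

lemma r59: "(-1/4) + (-1) * \<alpha>2 * \<alpha>3 + (-1) * \<alpha>2 * \<mu> + (-1) * \<alpha>3 * \<mu> + 1 * \<beta>2' * \<nu> = 0"
  using EX[where a=S and b=T and c=T and x="[S]" and y="[]" and z="[T,T]"]
  by (simp add: ttL_def ssL_def tsL_def negswap_def qp_rhs_def tens3_def ncmul_mono ncone_mono mono_eval del: mult_eq_0_iff, (use zs in algebra)?)

lemma r60: "(-1) * \<alpha>1' * \<beta>1 + 1 * \<alpha>1' * l + (-1) * \<alpha>2 * \<beta>1 + 1 * \<alpha>2 * l + 1 * \<beta>2 * \<gamma>0 = 0"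
  using EX[where a=S and b=S and c=T and x="[]" and y="[S]" and z="[T]"]
  by (simp add: ttL_def ssL_def tsL_def negswap_def qp_rhs_def tens3_def ncmul_mono ncone_mono mono_eval del: mult_eq_0_iff, (use zs in algebra)?)

lemma r61: "(-1) * \<alpha>2 * \<beta>2 + 1 * \<alpha>2' * \<beta>2' + 1 * \<beta>2 * m + 1 * \<beta>2' * m + (-1) * \<gamma>1 * l = 0"
  using EX[where a=S and b=S and c=T and x="[S]" and y="[]" and z="[S]"]
  by (simp add: ttL_def ssL_def tsL_def negswap_def qp_rhs_def tens3_def ncmul_mono ncone_mono mono_eval del: mult_eq_0_iff, (use zs in algebra)?)

lemma r62: "1/4 + 1 * \<alpha>1' * \<alpha>2' + (-1) * \<alpha>1' * \<mu> + (-1) * \<alpha>2' * \<mu> + 1 * \<beta>2 * \<nu> = 0"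
  using EX[where a=S and b=T and c=T and x="[]" and y="[S]" and z="[T,T]"]
  by (simp add: ttL_def ssL_def tsL_def negswap_def qp_rhs_def tens3_def ncmul_mono ncone_mono mono_eval del: mult_eq_0_iff, (use zs in algebra)?)

lemma r63: "1 * \<alpha>2' * \<beta>1' + 1 * \<alpha>2' * l + 1 * \<alpha>3 * \<beta>1' + 1 * \<alpha>3 * l + (-1) * \<beta>2' * \<gamma>0 = 0"
  using EX[where a=S and b=S and c=T and x="[T]" and y="[S]" and z="[]"]
  by (simp add: ttL_def ssL_def tsL_def negswap_def qp_rhs_def tens3_def ncmul_mono ncone_mono mono_eval del: mult_eq_0_iff, (use zs in algebra)?)

lemma r64: "1 * \<alpha>1' * \<beta>1 + (-1) * \<alpha>2 * \<beta>1 + 1 * \<beta>2 * \<gamma>0 + (-1) * \<gamma> * \<nu> + (-1) * \<gamma>0 * lam = 0"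
  using EX[where a=S and b=T and c=T and x="[]" and y="[T]" and z="[T]"]
  by (simp add: ttL_def ssL_def tsL_def negswap_def qp_rhs_def tens3_def ncmul_mono ncone_mono mono_eval del: mult_eq_0_iff, (use zs in algebra)?)

lemma r65: "1 * \<alpha>1' * \<beta>1' + (-1) * \<alpha>3 * \<beta>1 + (-1) * \<beta>1 * \<mu> + (-1) * \<beta>1' * \<mu> + 1 * \<gamma> * \<nu> = 0"
  using EX[where a=S and b=T and c=T and x="[]" and y="[]" and z="[T,T]"]
  by (simp add: ttL_def ssL_def tsL_def negswap_def qp_rhs_def tens3_def ncmul_mono ncone_mono mono_eval del: mult_eq_0_iff, (use zs in algebra)?)

lemma r66: "(-1) * \<alpha>2 * \<beta>1' + 1 * \<alpha>2' * \<beta>1 + (-1) * \<beta>1 * \<mu> + (-1) * \<beta>1' * \<mu> + 1 * \<gamma>0 * lam = 0"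
  using EX[where a=S and b=T and c=T and x="[T]" and y="[T]" and z="[]"]
  by (simp add: ttL_def ssL_def tsL_def negswap_def qp_rhs_def tens3_def ncmul_mono ncone_mono mono_eval del: mult_eq_0_iff, (use zs in algebra)?)

lemma r67: "1 * \<alpha>2' * \<beta>1' + (-1) * \<alpha>3 * \<beta>1' + (-1) * \<beta>2' * \<gamma>0 + (-1) * \<gamma> * \<nu> + (-1) * \<gamma>0 * lam = 0"
  using EX[where a=S and b=T and c=T and x="[T]" and y="[]" and z="[T]"]
  by (simp add: ttL_def ssL_def tsL_def negswap_def qp_rhs_def tens3_def ncmul_mono ncone_mono mono_eval del: mult_eq_0_iff, (use zs in algebra)?)

lemma r68: "1 * \<alpha>1' * \<beta>2 + (-1) * \<alpha>1' * lam + 1 * \<alpha>2' * \<beta>2 + (-1) * \<alpha>2' * lam + (-1) * \<beta>1 * \<gamma>1 = 0"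
  using EX[where a=S and b=T and c=T and x="[]" and y="[S]" and z="[T]"]
  by (simp add: ttL_def ssL_def tsL_def negswap_def qp_rhs_def tens3_def ncmul_mono ncone_mono mono_eval del: mult_eq_0_iff, (use zs in algebra)?)

lemma r69: "(-1) * \<alpha>2 * \<beta>2' + (-1) * \<alpha>2 * lam + (-1) * \<alpha>3 * \<beta>2' + (-1) * \<alpha>3 * lam + 1 * \<beta>1' * \<gamma>1 = 0"
  using EX[where a=S and b=T and c=T and x="[S]" and y="[]" and z="[T]"]
  by (simp add: ttL_def ssL_def tsL_def negswap_def qp_rhs_def tens3_def ncmul_mono ncone_mono mono_eval del: mult_eq_0_iff, (use zs in algebra)?)

lemma r70: "(-1) * \<alpha>1' * \<gamma> + 1 * \<alpha>3 * \<gamma> + (-1) * \<beta>1 * \<beta>2' + 1 * \<beta>1' * \<beta>2 + 1 * \<beta>2 * l + 1 * \<beta>2' * l = 0"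
  using EX[where a=S and b=S and c=T and x="[]" and y="[S]" and z="[]"]
  by (simp add: ttL_def ssL_def tsL_def negswap_def qp_rhs_def tens3_def ncmul_mono ncone_mono mono_eval del: mult_eq_0_iff, (use zs in algebra)?)

lemma r71: "1 * \<alpha>1' * \<gamma> + (-1) * \<alpha>3 * \<gamma> + (-1) * \<beta>1 * \<beta>2' + (-1) * \<beta>1 * lam + 1 * \<beta>1' * \<beta>2 + (-1) * \<beta>1' * lam = 0"
  using EX[where a=S and b=T and c=T and x="[]" and y="[]" and z="[T]"]
  by (simp add: ttL_def ssL_def tsL_def negswap_def qp_rhs_def tens3_def ncmul_mono ncone_mono mono_eval del: mult_eq_0_iff, (use zs in algebra)?)

end

lemma sw_False[simp]: "sw False x = x" by (cases x) auto
lemma map_sw_False[simp]: "map (sw False) u = u" by (induction u) auto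

context hyps begin

lemma conclude:
  assumes "normal_form (lc (TML (FI b p q) (GG (sw b T) (sw b T)))) (lc (TML (FI b p q) (GG (sw b S) (sw b S))))
                       (lc (TML (FI b p q) (GG (sw b T) (sw b S))))"
  shows "\<exists>br'. is_double_bracket br' \<and> isomorphic_dqp br br' \<and>
           normal_form (br' tgen tgen) (br' sgen sgen) (br' tgen sgen)"
proof (intro exI conjI)
  interpret ip: inv_pair "\<lambda>x. lc1 (FI b p q x)" "\<lambda>x. lc1 (GI b p q x)" by (rule inv_pair_FG)
  let ?br = "transp (\<lambda>x. lc1 (FI b p q x)) (\<lambda>x. lc1 (GI b p q x)) br"
  show "is_double_bracket ?br" by (rule ip.transp_db[OF db])
  show "isomorphic_dqp br ?br" by (rule ip.transp_iso[OF db])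
  have e: "?br (mono [x]) (mono [y]) = lc (TML (FI b p q) (GG (sw b x) (sw b y)))" for x y
    by (simp add: transp_gen[OF db] br_G tmap2_lc)
  show "normal_form (?br tgen tgen) (?br sgen sgen) (?br tgen sgen)"
    using assms by (simp add: ncgen_def e)
qed

lemma fin_id:
  assumes z: "\<alpha>0 = 0" "\<alpha>0' = 0" "\<beta>0 = 0" "\<beta>0' = 0" "\<alpha>1 = 0" "\<alpha>3' = 0"
    and r: "\<beta>1 = \<gamma>0*p + (\<alpha>1' + \<alpha>2)*q" "\<beta>1' = \<gamma>0*p + (\<alpha>2' + \<alpha>3)*q"
    "\<beta>2 = \<gamma>1*q + (\<alpha>1' + \<alpha>2')*p" "\<beta>2' = \<gamma>1*q + (\<alpha>2 + \<alpha>3)*p"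
    "\<gamma> = gN + \<gamma>0*p^2 + \<gamma>1*q^2 + (\<alpha>1' + \<alpha>2 + \<alpha>2' + \<alpha>3)*p*q"
    and nf: "normal_form
      (lc [(lam - 2*p*\<mu> + p^2*\<nu>, [T], []), (-(lam - 2*p*\<mu> + p^2*\<nu>), [], [T]),
      (\<mu> - p*\<nu>, [T,T], []), (-(\<mu> - p*\<nu>), [], [T,T]), (\<nu>, [T,T], [T]), (-\<nu>, [T], [T,T])])
      (lc [(l - 2*q*m + q^2*n, [S], []), (-(l - 2*q*m + q^2*n), [], [S]),
      (m - q*n, [S,S], []), (-(m - q*n), [], [S,S]), (n, [S,S], [S]), (-n, [S], [S,S])])
      (lc [(\<gamma>0, [T], [T]), (\<gamma>1, [S], [S]), (\<alpha>1', [S,T], []),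
     (\<alpha>2, [T], [S]), (\<alpha>2', [S], [T]), (\<alpha>3, [], [T,S]), (gN, [], [])])"
  shows "\<exists>br'. is_double_bracket br' \<and> isomorphic_dqp br br' \<and>
           normal_form (br' tgen tgen) (br' sgen sgen) (br' tgen sgen)"
  apply (rule conclude[where b=False and p=p and q=q])
  using nf tt_shift[of False p q] ss_shift[of False p q] ts_shift_id[OF z r]
  by (simp add: split_def)

lemma fin_sw:
  assumes z: "\<alpha>0 = 0" "\<alpha>0' = 0" "\<beta>0 = 0" "\<beta>0' = 0" "\<alpha>1 = 0" "\<alpha>3' = 0"
    and r: "\<beta>1 = \<gamma>0*p + (\<alpha>1' + \<alpha>2)*q" "\<beta>1' = \<gamma>0*p + (\<alpha>2' + \<alpha>3)*q"
    "\<beta>2 = \<gamma>1*q + (\<alpha>1' + \<alpha>2')*p" "\<beta>2' = \<gamma>1*q + (\<alpha>2 + \<alpha>3)*p"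
    "\<gamma> = gN + \<gamma>0*p^2 + \<gamma>1*q^2 + (\<alpha>1' + \<alpha>2 + \<alpha>2' + \<alpha>3)*p*q"
    and nf: "normal_form
      (lc [(l - 2*q*m + q^2*n, [T], []), (-(l - 2*q*m + q^2*n), [], [T]),
      (m - q*n, [T,T], []), (-(m - q*n), [], [T,T]), (n, [T,T], [T]), (-n, [T], [T,T])])
      (lc [(lam - 2*p*\<mu> + p^2*\<nu>, [S], []), (-(lam - 2*p*\<mu> + p^2*\<nu>), [], [S]),
      (\<mu> - p*\<nu>, [S,S], []), (-(\<mu> - p*\<nu>), [], [S,S]), (\<nu>, [S,S], [S]), (-\<nu>, [S], [S,S])])
      (lc [(-\<gamma>1, [T], [T]), (-\<gamma>0, [S], [S]), (-\<alpha>3, [S,T], []),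
     (-\<alpha>2, [T], [S]), (-\<alpha>2', [S], [T]), (-\<alpha>1', [], [T,S]), (-gN, [], [])])"
  shows "\<exists>br'. is_double_bracket br' \<and> isomorphic_dqp br br' \<and>
           normal_form (br' tgen tgen) (br' sgen sgen) (br' tgen sgen)"
  apply (rule conclude[where b=True and p=p and q=q])
  using nf tt_shift[of True p q] ss_shift[of True p q] ts_shift_sw[OF z r]
  by (simp add: split_def)

end

lemma nf1I: "pm_half \<mu> \<Longrightarrow> \<alpha>^2 = 1/4 + g0 * g1 \<Longrightarrow> Btt = TT_quad \<mu> \<Longrightarrow> Bss = SS_quad \<mu> \<Longrightarrow>
  Bts = lc [(g0, [T], [T]), (g1, [S], [S]), (\<mu>, [S,T], []), (-\<mu>, [], [T,S]), (\<alpha>, [T], [S]), (\<alpha>, [S], [T])] \<Longrightarrow>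
  normal_form Btt Bss Bts"
  unfolding normal_form_def by blast

lemma nf2I: "pm_half \<alpha> \<Longrightarrow> pm_half \<mu> \<Longrightarrow> Btt = TT_quad \<mu> \<Longrightarrow> Bss = SS_quad (-\<mu>) \<Longrightarrow>
  Bts = lc [(\<alpha>, [S,T], []), (\<alpha>, [], [T,S]), (\<mu>, [S], [T]), (-\<mu>, [T], [S]), (g, [], [])] \<Longrightarrow>
  normal_form Btt Bss Bts"
  unfolding normal_form_def by blast

lemma nf3I: "pm_half m \<Longrightarrow> pm_half \<mu> \<Longrightarrow> Btt = TT_quad \<mu> \<Longrightarrow> Bss = SS_quad m \<Longrightarrow> Bts = TS_A \<mu> \<Longrightarrow>
  normal_form Btt Bss Bts"
  unfolding normal_form_def by blast

lemma nf4I: "pm_half \<alpha> \<Longrightarrow> pm_half m \<Longrightarrow> pm_half \<mu> \<Longrightarrow> Btt = TT_quad \<mu> \<Longrightarrow> Bss = SS_quad m \<Longrightarrow> Bts = TS_B \<alpha> \<Longrightarrow>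
  normal_form Btt Bss Bts"
  unfolding normal_form_def by blast

lemma nf5I: "n \<noteq> 0 \<Longrightarrow> pm_half \<alpha> \<Longrightarrow> pm_half \<mu> \<Longrightarrow> Btt = TT_quad \<mu> \<Longrightarrow> Bss = SS_cub n \<Longrightarrow> Bts = TS_B \<alpha> \<Longrightarrow>
  normal_form Btt Bss Bts"
  unfolding normal_form_def by blast

lemma nf6I: "n \<noteq> 0 \<Longrightarrow> pm_half \<mu> \<Longrightarrow> Btt = TT_quad \<mu> \<Longrightarrow> Bss = SS_cub n \<Longrightarrow> Bts = TS_A \<mu> \<Longrightarrow>
  normal_form Btt Bss Bts"
  unfolding normal_form_def by blast

lemma nf7I: "n \<noteq> 0 \<Longrightarrow> \<nu> \<noteq> 0 \<Longrightarrow> pm_half \<alpha> \<Longrightarrow> Btt = TT_cub \<nu> \<Longrightarrow> Bss = SS_cub n \<Longrightarrow> Bts = TS_B \<alpha> \<Longrightarrow>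
  normal_form Btt Bss Bts"
  unfolding normal_form_def by blast

lemma TTq: "x = 0 \<Longrightarrow> y = \<mu> \<Longrightarrow> z = 0 \<Longrightarrow>
  lc [(x, [T], []), (-x, [], [T]), (y, [T,T], []), (-y, [], [T,T]), (z, [T,T], [T]), (-z, [T], [T,T])] = TT_quad (\<mu>::'k::field)"
  unfolding TT_quad_def by (rule lc_eqI[where K="KT T"]) (auto simp: keys_def KT_def)

lemma SSq: "x = 0 \<Longrightarrow> y = \<mu> \<Longrightarrow> z = 0 \<Longrightarrow>
  lc [(x, [S], []), (-x, [], [S]), (y, [S,S], []), (-y, [], [S,S]), (z, [S,S], [S]), (-z, [S], [S,S])] = SS_quad (\<mu>::'k::field)"
  unfolding SS_quad_def by (rule lc_eqI[where K="KT S"]) (auto simp: keys_def KT_def)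

lemma TTc: "x = -1/(4*z) \<Longrightarrow> y = 0 \<Longrightarrow>
  lc [(x, [T], []), (-x, [], [T]), (y, [T,T], []), (-y, [], [T,T]), (z, [T,T], [T]), (-z, [T], [T,T])] = TT_cub (z::'k::field)"
  unfolding TT_cub_def by (rule lc_eqI[where K="KT T"]) (auto simp: keys_def KT_def)

lemma SSc: "x = -1/(4*z) \<Longrightarrow> y = 0 \<Longrightarrow>
  lc [(x, [S], []), (-x, [], [S]), (y, [S,S], []), (-y, [], [S,S]), (z, [S,S], [S]), (-z, [S], [S,S])] = SS_cub (z::'k::field)"
  unfolding SS_cub_def by (rule lc_eqI[where K="KT S"]) (auto simp: keys_def KT_def)

lemma TSA: "g0 = 0 \<Longrightarrow> g1 = 0 \<Longrightarrow> gN = 0 \<Longrightarrow> A = c \<Longrightarrow> B = -c \<Longrightarrow> C = c \<Longrightarrow> D = -c \<Longrightarrow>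
  lc [(g0, [T], [T]), (g1, [S], [S]), (A, [S,T], []), (B, [T], [S]), (C, [S], [T]), (D, [], [T,S]), (gN, [], [])] = TS_A (c::'k::field)"
  unfolding TS_A_def by (rule lc_eqI[where K="K2"]) (auto simp: keys_def K2_def)

lemma TSB: "g0 = 0 \<Longrightarrow> g1 = 0 \<Longrightarrow> gN = 0 \<Longrightarrow> A = c \<Longrightarrow> B = -c \<Longrightarrow> C = -c \<Longrightarrow> D = c \<Longrightarrow>
  lc [(g0, [T], [T]), (g1, [S], [S]), (A, [S,T], []), (B, [T], [S]), (C, [S], [T]), (D, [], [T,S]), (gN, [], [])] = TS_B (c::'k::field)"
  unfolding TS_B_def by (rule lc_eqI[where K="K2"]) (auto simp: keys_def K2_def)

lemma TS1: "A = \<mu> \<Longrightarrow> D = -\<mu> \<Longrightarrow> B = \<alpha> \<Longrightarrow> C = \<alpha> \<Longrightarrow> gN = 0 \<Longrightarrow>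
  lc [(g0, [T], [T]), (g1, [S], [S]), (A, [S,T], []), (B, [T], [S]), (C, [S], [T]), (D, [], [T,S]), (gN, [], [])] =
  lc [(g0, [T], [T]), (g1, [S], [S]), (\<mu>, [S,T], []), (-\<mu>, [], [T,S]), (\<alpha>, [T], [S]), (\<alpha>::'k::field, [S], [T])]"
  by (rule lc_eqI[where K="K2"]) (auto simp: keys_def K2_def)

lemma TS2: "g0 = 0 \<Longrightarrow> g1 = 0 \<Longrightarrow> A = \<alpha> \<Longrightarrow> D = \<alpha> \<Longrightarrow> B = -\<mu> \<Longrightarrow> C = \<mu> \<Longrightarrow>
  lc [(g0, [T], [T]), (g1, [S], [S]), (A, [S,T], []), (B, [T], [S]), (C, [S], [T]), (D, [], [T,S]), (gN, [], [])] =
  lc [(\<alpha>, [S,T], []), (\<alpha>, [], [T,S]), (\<mu>, [S], [T]), (-\<mu>, [T], [S]), (gN::'k::field, [], [])]"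
  by (rule lc_eqI[where K="K2"]) (auto simp: keys_def K2_def)

lemma sq_quarter: "(x::'k::field_char_0)^2 = 1/4 \<Longrightarrow> x = 1/2 \<or> x = -(1/2)"
proof -
  assume "x^2 = 1/4"
  hence "x^2 = (1/2)^2" by (simp add: power2_eq_square)
  thus ?thesis by (simp add: power2_eq_iff)
qed

lemma pm_half_sq: "(x::'k::field_char_0)^2 = 1/4 \<Longrightarrow> pm_half x"
  using sq_quarter by (auto simp: pm_half_def)

lemma lin_cancel2: "(x::'k::field) * n + y * n = 0 \<Longrightarrow> n \<noteq> 0 \<Longrightarrow> y = - x"
proof -
  assume "x * n + y * n = 0" "n \<noteq> 0"
  hence "(x + y) * n = 0" by (simp add: distrib_right)
  hence "x + y = 0" using \<open>n \<noteq> 0\<close> by simp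
  thus ?thesis by (metis neg_eq_iff_add_eq_0)
qed

lemma sq_same: "(x::'k::field_char_0)^2 = c^2 \<Longrightarrow> x = c \<or> x = -c"
  by (simp add: power2_eq_iff)

lemma classify:
  fixes \<mu> m A B C D :: "'k::field_char_0"
  assumes "pm_half \<mu>" "pm_half m" "pm_half A" "pm_half B" "pm_half C" "pm_half D"
    "(C + m) * (D + m) = 0" "(A - m) * (B - m) = 0" "(B + \<mu>) * (D + \<mu>) = 0" "(A - \<mu>) * (C - \<mu>) = 0"
  shows "(m = \<mu> \<and> A = \<mu> \<and> D = -\<mu> \<and> B = C) \<or> (m = -\<mu> \<and> A = D \<and> B = -\<mu> \<and> C = \<mu>) \<or>
    (A = \<mu> \<and> B = -\<mu> \<and> C = \<mu> \<and> D = -\<mu>) \<or> (A = m \<and> B = m \<and> C = -m \<and> D = -m) \<or>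
    (A = D \<and> B = -A \<and> C = -A)"
  using assms unfolding pm_half_def by (elim disjE; hypsubst_thin+; simp)

context hyps begin

lemma common:
  shows "\<beta>1 * n = 0" "\<beta>1' * n = 0" "\<beta>2 * \<nu> = 0" "\<beta>2' * \<nu> = 0"
    "\<alpha>1'^2 = 1/4" "\<alpha>3^2 = 1/4" "\<alpha>2^2 = 1/4 + \<gamma>0 * \<gamma>1" "\<alpha>2'^2 = 1/4 + \<gamma>0 * \<gamma>1"
proof -
  show b1: "\<beta>1 * n = 0" using r46 r55 by algebra
  show b1': "\<beta>1' * n = 0" using r45 r54 by algebra
  show "\<beta>2 * \<nu> = 0" using r52 r62 by algebra
  show "\<beta>2' * \<nu> = 0" using r50 r59 by algebra
  show "\<alpha>1'^2 = 1/4" using r23 b1 by algebra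
  show "\<alpha>3^2 = 1/4" using r24 b1' by algebra
  show "\<alpha>2^2 = 1/4 + \<gamma>0 * \<gamma>1" using r44 b1 by algebra
  show "\<alpha>2'^2 = 1/4 + \<gamma>0 * \<gamma>1" using r47 b1' by algebra
qed

definition "Pt = (if \<nu> = 0 then 2*\<mu>*lam else \<mu>/\<nu>)"
definition "Qs = (if n = 0 then 2*m*l else m/n)"
definition "TTn = (if \<nu> = 0 then TT_quad \<mu> else TT_cub \<nu>)"
definition "SSn = (if n = 0 then SS_quad m else SS_cub n)"
definition "TTn' = (if n = 0 then TT_quad m else TT_cub n)"
definition "SSn' = (if \<nu> = 0 then SS_quad \<mu> else SS_cub \<nu>)"

lemma mu_sq: "\<nu> = 0 \<Longrightarrow> \<mu>^2 = 1/4" using cond_t by (simp add: field_simps)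
lemma m_sq: "n = 0 \<Longrightarrow> m^2 = 1/4" using cond_s by (simp add: field_simps)

lemma tt_ok: "lc [(lam - 2*Pt*\<mu> + Pt^2*\<nu>, [T], []), (-(lam - 2*Pt*\<mu> + Pt^2*\<nu>), [], [T]),
      (\<mu> - Pt*\<nu>, [T,T], []), (-(\<mu> - Pt*\<nu>), [], [T,T]), (\<nu>, [T,T], [T]), (-\<nu>, [T], [T,T])] = TTn"
proof (cases "\<nu> = 0")
  case True
  have e: "Pt = 2*\<mu>*lam" "TTn = TT_quad \<mu>" unfolding Pt_def TTn_def using True by simp_all
  show ?thesis unfolding e by (rule TTq) (use cond_t True in \<open>auto simp: field_simps power2_eq_square\<close>)
next
  case False
  have e: "Pt = \<mu>/\<nu>" "TTn = TT_cub \<nu>" unfolding Pt_def TTn_def using False by simp_all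
  show ?thesis unfolding e by (rule TTc) (use cond_t False in \<open>auto simp: field_simps power2_eq_square\<close>)
qed

lemma ss_ok: "lc [(l - 2*Qs*m + Qs^2*n, [S], []), (-(l - 2*Qs*m + Qs^2*n), [], [S]),
      (m - Qs*n, [S,S], []), (-(m - Qs*n), [], [S,S]), (n, [S,S], [S]), (-n, [S], [S,S])] = SSn"
proof (cases "n = 0")
  case True
  have e: "Qs = 2*m*l" "SSn = SS_quad m" unfolding Qs_def SSn_def using True by simp_all
  show ?thesis unfolding e by (rule SSq) (use cond_s True in \<open>auto simp: field_simps power2_eq_square\<close>)
next
  case False
  have e: "Qs = m/n" "SSn = SS_cub n" unfolding Qs_def SSn_def using False by simp_all
  show ?thesis unfolding e by (rule SSc) (use cond_s False in \<open>auto simp: field_simps power2_eq_square\<close>)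
qed

lemma tt_ok': "lc [(lam - 2*Pt*\<mu> + Pt^2*\<nu>, [S], []), (-(lam - 2*Pt*\<mu> + Pt^2*\<nu>), [], [S]),
      (\<mu> - Pt*\<nu>, [S,S], []), (-(\<mu> - Pt*\<nu>), [], [S,S]), (\<nu>, [S,S], [S]), (-\<nu>, [S], [S,S])] = SSn'"
proof (cases "\<nu> = 0")
  case True
  have e: "Pt = 2*\<mu>*lam" "SSn' = SS_quad \<mu>" unfolding Pt_def SSn'_def using True by simp_all
  show ?thesis unfolding e by (rule SSq) (use cond_t True in \<open>auto simp: field_simps power2_eq_square\<close>)
next
  case False
  have e: "Pt = \<mu>/\<nu>" "SSn' = SS_cub \<nu>" unfolding Pt_def SSn'_def using False by simp_all
  show ?thesis unfolding e by (rule SSc) (use cond_t False in \<open>auto simp: field_simps power2_eq_square\<close>)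
qed

lemma ss_ok': "lc [(l - 2*Qs*m + Qs^2*n, [T], []), (-(l - 2*Qs*m + Qs^2*n), [], [T]),
      (m - Qs*n, [T,T], []), (-(m - Qs*n), [], [T,T]), (n, [T,T], [T]), (-n, [T], [T,T])] = TTn'"
proof (cases "n = 0")
  case True
  have e: "Qs = 2*m*l" "TTn' = TT_quad m" unfolding Qs_def TTn'_def using True by simp_all
  show ?thesis unfolding e by (rule TTq) (use cond_s True in \<open>auto simp: field_simps power2_eq_square\<close>)
next
  case False
  have e: "Qs = m/n" "TTn' = TT_cub n" unfolding Qs_def TTn'_def using False by simp_all
  show ?thesis unfolding e by (rule TTc) (use cond_s False in \<open>auto simp: field_simps power2_eq_square\<close>)
qed

lemma fin_id2:
  assumes r: "\<beta>1 = \<gamma>0*Pt + (\<alpha>1' + \<alpha>2)*Qs" "\<beta>1' = \<gamma>0*Pt + (\<alpha>2' + \<alpha>3)*Qs"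
    "\<beta>2 = \<gamma>1*Qs + (\<alpha>1' + \<alpha>2')*Pt" "\<beta>2' = \<gamma>1*Qs + (\<alpha>2 + \<alpha>3)*Pt"
    "\<gamma> = gN + \<gamma>0*Pt^2 + \<gamma>1*Qs^2 + (\<alpha>1' + \<alpha>2 + \<alpha>2' + \<alpha>3)*Pt*Qs"
    and nf: "normal_form TTn SSn (lc [(\<gamma>0, [T], [T]), (\<gamma>1, [S], [S]), (\<alpha>1', [S,T], []),
     (\<alpha>2, [T], [S]), (\<alpha>2', [S], [T]), (\<alpha>3, [], [T,S]), (gN, [], [])])"
  shows "\<exists>br'. is_double_bracket br' \<and> isomorphic_dqp br br' \<and>
           normal_form (br' tgen tgen) (br' sgen sgen) (br' tgen sgen)"
  by (rule fin_id[OF z0 z1 z4 z5 z2 z3 r]) (simp only: tt_ok ss_ok nf)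

lemma fin_sw2:
  assumes r: "\<beta>1 = \<gamma>0*Pt + (\<alpha>1' + \<alpha>2)*Qs" "\<beta>1' = \<gamma>0*Pt + (\<alpha>2' + \<alpha>3)*Qs"
    "\<beta>2 = \<gamma>1*Qs + (\<alpha>1' + \<alpha>2')*Pt" "\<beta>2' = \<gamma>1*Qs + (\<alpha>2 + \<alpha>3)*Pt"
    "\<gamma> = gN + \<gamma>0*Pt^2 + \<gamma>1*Qs^2 + (\<alpha>1' + \<alpha>2 + \<alpha>2' + \<alpha>3)*Pt*Qs"
    and nf: "normal_form TTn' SSn' (lc [(-\<gamma>1, [T], [T]), (-\<gamma>0, [S], [S]), (-\<alpha>3, [S,T], []),
     (-\<alpha>2, [T], [S]), (-\<alpha>2', [S], [T]), (-\<alpha>1', [], [T,S]), (-gN, [], [])])"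
  shows "\<exists>br'. is_double_bracket br' \<and> isomorphic_dqp br br' \<and>
           normal_form (br' tgen tgen) (br' sgen sgen) (br' tgen sgen)"
  by (rule fin_sw[OF z0 z1 z4 z5 z2 z3 r]) (simp only: tt_ok' ss_ok' nf)

lemma caseI:
  assumes nu: "\<nu> \<noteq> 0" and nn: "n \<noteq> 0"
  shows "\<exists>br'. is_double_bracket br' \<and> isomorphic_dqp br br' \<and>
           normal_form (br' tgen tgen) (br' sgen sgen) (br' tgen sgen)"
proof -
  note c = common
  have g0: "\<gamma>0 = 0" using r1 nn by simp
  have g1: "\<gamma>1 = 0" using r0 nn by simp
  have a2: "\<alpha>2 = - \<alpha>1'" using lin_cancel2[OF r4 nn] by simp
  have a2': "\<alpha>2' = - \<alpha>3" using lin_cancel2[OF r7 nn] by simp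
  have a3: "\<alpha>3 = \<alpha>1'" using r19 nu a2 by (simp add: algebra_simps)
  have b1: "\<beta>1 = 0" "\<beta>1' = 0" using c(1,2) nn by simp_all
  have b2: "\<beta>2 = 0" "\<beta>2' = 0" using c(3,4) nu by simp_all
  have A0: "\<alpha>1' \<noteq> 0" using c(5) by auto
  have g: "\<gamma> = 0"
  proof -
    have "(m - \<alpha>1') * \<gamma> = 0" using r30 a2' a3 b1 b2 by algebra
    moreover have "(m + \<alpha>1') * \<gamma> = 0" using r31 a2 b1 b2 by algebra
    ultimately have "(2 * \<alpha>1') * \<gamma> = 0" by algebra
    thus ?thesis using A0 by simp
  qed
  show ?thesis
  proof (rule fin_id[where p="\<mu>/\<nu>" and q="m/n" and gN=0, OF z0 z1 z4 z5 z2 z3])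
    show "\<beta>1 = \<gamma>0 * (\<mu>/\<nu>) + (\<alpha>1' + \<alpha>2) * (m/n)" using b1 g0 a2 by simp
    show "\<beta>1' = \<gamma>0 * (\<mu>/\<nu>) + (\<alpha>2' + \<alpha>3) * (m/n)" using b1 g0 a2' by simp
    show "\<beta>2 = \<gamma>1 * (m/n) + (\<alpha>1' + \<alpha>2') * (\<mu>/\<nu>)" using b2 g1 a2' a3 by simp
    show "\<beta>2' = \<gamma>1 * (m/n) + (\<alpha>2 + \<alpha>3) * (\<mu>/\<nu>)" using b2 g1 a2 a3 by simp
    show "\<gamma> = 0 + \<gamma>0 * (\<mu>/\<nu>)^2 + \<gamma>1 * (m/n)^2 + (\<alpha>1' + \<alpha>2 + \<alpha>2' + \<alpha>3) * (\<mu>/\<nu>) * (m/n)"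
      using g g0 g1 a2 a2' a3 by simp
    show "normal_form
      (lc [(lam - 2*(\<mu>/\<nu>)*\<mu> + (\<mu>/\<nu>)^2*\<nu>, [T], []), (-(lam - 2*(\<mu>/\<nu>)*\<mu> + (\<mu>/\<nu>)^2*\<nu>), [], [T]),
      (\<mu> - (\<mu>/\<nu>)*\<nu>, [T,T], []), (-(\<mu> - (\<mu>/\<nu>)*\<nu>), [], [T,T]), (\<nu>, [T,T], [T]), (-\<nu>, [T], [T,T])])
      (lc [(l - 2*(m/n)*m + (m/n)^2*n, [S], []), (-(l - 2*(m/n)*m + (m/n)^2*n), [], [S]),
      (m - (m/n)*n, [S,S], []), (-(m - (m/n)*n), [], [S,S]), (n, [S,S], [S]), (-n, [S], [S,S])])
      (lc [(\<gamma>0, [T], [T]), (\<gamma>1, [S], [S]), (\<alpha>1', [S,T], []),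
     (\<alpha>2, [T], [S]), (\<alpha>2', [S], [T]), (\<alpha>3, [], [T,S]), (0, [], [])])"
    proof (rule nf7I[OF nn nu pm_half_sq[OF c(5)]])
      show "lc [(lam - 2*(\<mu>/\<nu>)*\<mu> + (\<mu>/\<nu>)^2*\<nu>, [T], []), (-(lam - 2*(\<mu>/\<nu>)*\<mu> + (\<mu>/\<nu>)^2*\<nu>), [], [T]),
        (\<mu> - (\<mu>/\<nu>)*\<nu>, [T,T], []), (-(\<mu> - (\<mu>/\<nu>)*\<nu>), [], [T,T]), (\<nu>, [T,T], [T]), (-\<nu>, [T], [T,T])] = TT_cub \<nu>"
        by (rule TTc) (use nu cond_t in \<open>auto simp: field_simps power2_eq_square\<close>)
      show "lc [(l - 2*(m/n)*m + (m/n)^2*n, [S], []), (-(l - 2*(m/n)*m + (m/n)^2*n), [], [S]),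
        (m - (m/n)*n, [S,S], []), (-(m - (m/n)*n), [], [S,S]), (n, [S,S], [S]), (-n, [S], [S,S])] = SS_cub n"
        by (rule SSc) (use nn cond_s in \<open>auto simp: field_simps power2_eq_square\<close>)
      show "lc [(\<gamma>0, [T], [T]), (\<gamma>1, [S], [S]), (\<alpha>1', [S,T], []),
        (\<alpha>2, [T], [S]), (\<alpha>2', [S], [T]), (\<alpha>3, [], [T,S]), (0, [], [])] = TS_B \<alpha>1'"
        by (rule TSB) (use g0 g1 a2 a2' a3 in auto)
    qed
  qed
qed


lemma caseII:
  assumes nu: "\<nu> = 0" and nn: "n \<noteq> 0"
  shows "\<exists>br'. is_double_bracket br' \<and> isomorphic_dqp br br' \<and>
           normal_form (br' tgen tgen) (br' sgen sgen) (br' tgen sgen)"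
proof -
  note c = common
  have mu2: "\<mu>^2 = 1/4" using mu_sq nu .
  have mu0: "\<mu> \<noteq> 0" using mu2 by auto
  have mu4: "4 * \<mu>^2 = 1" using mu2 by (simp add: mult.commute)
  have g0: "\<gamma>0 = 0" using r1 nn by simp
  have g1: "\<gamma>1 = 0" using r0 nn by simp
  have a2: "\<alpha>2 = - \<alpha>1'" using lin_cancel2[OF r4 nn] by simp
  have a2': "\<alpha>2' = - \<alpha>3" using lin_cancel2[OF r7 nn] by simp
  have b1: "\<beta>1 = 0" "\<beta>1' = 0" using c(1,2) nn by simp_all
  have Pt: "Pt = 2*\<mu>*lam" unfolding Pt_def using nu by simp
  have Qs: "Qs = m/n" unfolding Qs_def using nn by simp
  have TTn: "TTn = TT_quad \<mu>" unfolding TTn_def using nu by simp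
  have SSn: "SSn = SS_cub n" unfolding SSn_def using nn by simp
  have fac: "(\<alpha>1' - \<mu>) * (\<alpha>3 + \<mu>) = 0" using r52 a2' mu4 by algebra
  have A: "\<alpha>1' = \<mu> \<or> \<alpha>1' = -\<mu>" using sq_same[of "\<alpha>1'" \<mu>] c(5) mu2 by simp
  have D: "\<alpha>3 = \<mu> \<or> \<alpha>3 = -\<mu>" using sq_same[of "\<alpha>3" \<mu>] c(6) mu2 by simp
  have cs: "(\<alpha>1' = \<mu> \<and> \<alpha>3 = \<mu>) \<or> (\<alpha>1' = \<mu> \<and> \<alpha>3 = -\<mu>) \<or> (\<alpha>1' = -\<mu> \<and> \<alpha>3 = -\<mu>)"
    using A D fac mu0 by auto
  have pa: "pm_half \<alpha>1'" using pm_half_sq[OF c(5)] .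
  have pm: "pm_half \<mu>" using pm_half_sq[OF mu2] .
  from cs show ?thesis
  proof (elim disjE conjE)
    assume a: "\<alpha>1' = \<mu>" and d: "\<alpha>3 = \<mu>"
    have "(2*\<mu>) * \<beta>2 = 0" using r43 a2' d b1 g1 by algebra
    hence b2: "\<beta>2 = 0" using mu0 by simp
    have "(2*\<mu>) * \<beta>2' = 0" using r22 d by algebra
    hence b2': "\<beta>2' = 0" using mu0 by simp
    have "\<gamma> * n = 0" using r56 b2 b1 g1 by algebra
    hence g: "\<gamma> = 0" using nn by simp
    show ?thesis
    proof (rule fin_id2[where gN=0])
      show "normal_form TTn SSn (lc [(\<gamma>0, [T], [T]), (\<gamma>1, [S], [S]), (\<alpha>1', [S,T], []),
        (\<alpha>2, [T], [S]), (\<alpha>2', [S], [T]), (\<alpha>3, [], [T,S]), (0, [], [])])"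
        unfolding TTn SSn by (rule nf5I[OF nn pa pm refl refl]) (rule TSB, use g0 g1 a2 a2' a d in auto)
    qed (use b1 b2 b2' g g0 g1 a2 a2' a d in simp_all)
  next
    assume a: "\<alpha>1' = \<mu>" and d: "\<alpha>3 = -\<mu>"
    have "(2*\<mu>) * (\<beta>2 - lam) = 0" using r68 a2' a d b1 g1 by algebra
    hence b2: "\<beta>2 = lam" using mu0 by simp
    have "(2*\<mu>) * (\<beta>2' + lam) = 0" using r69 a2 a d b1 g1 by algebra
    hence b2': "\<beta>2' = - lam" using mu0 by (simp add: add_eq_0_iff2)
    have "\<gamma> * n = 0" using r56 a2' a d b1 g1 by algebra
    hence g: "\<gamma> = 0" using nn by simp
    show ?thesis
    proof (rule fin_id2[where gN=0])
      show "normal_form TTn SSn (lc [(\<gamma>0, [T], [T]), (\<gamma>1, [S], [S]), (\<alpha>1', [S,T], []),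
        (\<alpha>2, [T], [S]), (\<alpha>2', [S], [T]), (\<alpha>3, [], [T,S]), (0, [], [])])"
        unfolding TTn SSn by (rule nf6I[OF nn pm refl refl]) (rule TSA, use g0 g1 a2 a2' a d in auto)
      show "\<beta>2 = \<gamma>1 * Qs + (\<alpha>1' + \<alpha>2') * Pt" unfolding b2 g1 a2' a d Pt by (simp only: mult_zero_left add_0_left) (use mu4 in algebra)
      show "\<beta>2' = \<gamma>1 * Qs + (\<alpha>2 + \<alpha>3) * Pt" unfolding b2' g1 a2 a d Pt by (simp only: mult_zero_left add_0_left) (use mu4 in algebra)
    qed (use b1 g g0 g1 a2 a2' a d in simp_all)
  next
    assume a: "\<alpha>1' = -\<mu>" and d: "\<alpha>3 = -\<mu>"
    have "(2*\<mu>) * \<beta>2 = 0" using r13 a by algebra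
    hence b2: "\<beta>2 = 0" using mu0 by simp
    have "(2*\<mu>) * \<beta>2' = 0" using r42 a2 a b1 g1 by algebra
    hence b2': "\<beta>2' = 0" using mu0 by simp
    have "\<gamma> * n = 0" using r56 b2 b1 g1 by algebra
    hence g: "\<gamma> = 0" using nn by simp
    show ?thesis
    proof (rule fin_id2[where gN=0])
      show "normal_form TTn SSn (lc [(\<gamma>0, [T], [T]), (\<gamma>1, [S], [S]), (\<alpha>1', [S,T], []),
        (\<alpha>2, [T], [S]), (\<alpha>2', [S], [T]), (\<alpha>3, [], [T,S]), (0, [], [])])"
        unfolding TTn SSn by (rule nf5I[OF nn pa pm refl refl]) (rule TSB, use g0 g1 a2 a2' a d in auto)
    qed (use b1 b2 b2' g g0 g1 a2 a2' a d in simp_all)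
  qed
qed

lemma caseIII:
  assumes nu: "\<nu> \<noteq> 0" and nn: "n = 0"
  shows "\<exists>br'. is_double_bracket br' \<and> isomorphic_dqp br br' \<and>
           normal_form (br' tgen tgen) (br' sgen sgen) (br' tgen sgen)"
proof -
  note c = common
  have m2: "m^2 = 1/4" using m_sq nn .
  have m0: "m \<noteq> 0" using m2 by auto
  have m4: "4 * m^2 = 1" using m2 by (simp add: mult.commute)
  have g0: "\<gamma>0 = 0" using r3 nu by simp
  have g1: "\<gamma>1 = 0" using r2 nu by simp
  have a2: "\<alpha>2 = - \<alpha>3" using lin_cancel2[OF r19 nu] by (simp add: minus_equation_iff eq_commute)
  have a2': "\<alpha>2' = - \<alpha>1'" using lin_cancel2[OF r21 nu] by (simp add: minus_equation_iff eq_commute)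
  have b2: "\<beta>2 = 0" "\<beta>2' = 0" using c(3,4) nu by simp_all
  have Pt: "Pt = \<mu>/\<nu>" unfolding Pt_def using nu by simp
  have Qs: "Qs = 2*m*l" unfolding Qs_def using nn by simp
  have TTn: "TTn' = TT_quad m" unfolding TTn'_def using nn by simp
  have SSn: "SSn' = SS_cub \<nu>" unfolding SSn'_def using nu by simp
  have "(\<alpha>1' - m) * (\<alpha>3 + m) = ((-1/4) + (-1) * \<alpha>1' * \<alpha>2 + 1 * \<alpha>1' * m + 1 * \<alpha>2 * m) + (1/4 - m^2)"
    unfolding a2 by (simp add: algebra_simps power2_eq_square)
  hence fac: "(\<alpha>1' - m) * (\<alpha>3 + m) = 0" using r46 m2 by simp
  have A: "\<alpha>1' = m \<or> \<alpha>1' = -m" using sq_same[of "\<alpha>1'" m] c(5) m2 by simp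
  have D: "\<alpha>3 = m \<or> \<alpha>3 = -m" using sq_same[of "\<alpha>3" m] c(6) m2 by simp
  have cs: "(\<alpha>1' = m \<and> \<alpha>3 = m) \<or> (\<alpha>1' = m \<and> \<alpha>3 = -m) \<or> (\<alpha>1' = -m \<and> \<alpha>3 = -m)"
    using A D fac m0 by auto
  have pd: "pm_half (- \<alpha>3)" using pm_half_sq[of "- \<alpha>3"] c(6) by simp
  have pm: "pm_half m" using pm_half_sq[OF m2] .
  from cs show ?thesis
  proof (elim disjE conjE)
    assume a: "\<alpha>1' = m" and d: "\<alpha>3 = m"
    have "(2*m) * \<beta>1 = 0" using r34 unfolding a2 d b2 by algebra
    hence b1: "\<beta>1 = 0" using m0 by simp
    have "(2*m) * \<beta>1' = 0" using r11 unfolding d by algebra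
    hence b1': "\<beta>1' = 0" using m0 by simp
    have "\<gamma> * \<nu> = 0" using r64 unfolding b1 b2 g0 by algebra
    hence g: "\<gamma> = 0" using nu by simp
    show ?thesis
    proof (rule fin_sw2[where gN=0])
      show "normal_form TTn' SSn' (lc [(-\<gamma>1, [T], [T]), (-\<gamma>0, [S], [S]), (-\<alpha>3, [S,T], []),
        (-\<alpha>2, [T], [S]), (-\<alpha>2', [S], [T]), (-\<alpha>1', [], [T,S]), (-0, [], [])])"
        unfolding TTn SSn by (rule nf5I[OF nu pd pm refl refl]) (rule TSB, use g0 g1 a2 a2' a d in auto)
    qed (use b1 b1' b2 g g0 g1 a2 a2' a d in simp_all)
  next
    assume a: "\<alpha>1' = m" and d: "\<alpha>3 = -m"
    have "(2*m) * (\<beta>1 - l) = 0" using r60 unfolding a2 a d b2 by algebra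
    hence b1: "\<beta>1 = l" using m0 by simp
    have "(2*m) * (\<beta>1' + l) = 0" using r63 unfolding a2' a d b2 by algebra
    hence b1': "\<beta>1' = - l" using m0 by (simp add: add_eq_0_iff2)
    have "\<gamma> * \<nu> = 0" using r64 unfolding a2 a d b2 g0 by algebra
    hence g: "\<gamma> = 0" using nu by simp
    show ?thesis
    proof (rule fin_sw2[where gN=0])
      show "normal_form TTn' SSn' (lc [(-\<gamma>1, [T], [T]), (-\<gamma>0, [S], [S]), (-\<alpha>3, [S,T], []),
        (-\<alpha>2, [T], [S]), (-\<alpha>2', [S], [T]), (-\<alpha>1', [], [T,S]), (-0, [], [])])"
        unfolding TTn SSn by (rule nf6I[OF nu pm refl refl]) (rule TSA, use g0 g1 a2 a2' a d in auto)
      show "\<beta>1 = \<gamma>0 * Pt + (\<alpha>1' + \<alpha>2) * Qs"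
        unfolding b1 g0 a2 a d Qs by (simp only: mult_zero_left add_0_left) (use m4 in algebra)
      show "\<beta>1' = \<gamma>0 * Pt + (\<alpha>2' + \<alpha>3) * Qs"
        unfolding b1' g0 a2' a d Qs by (simp only: mult_zero_left add_0_left) (use m4 in algebra)
    qed (use b2 g g0 g1 a2 a2' a d in simp_all)
  next
    assume a: "\<alpha>1' = -m" and d: "\<alpha>3 = -m"
    have "(2*m) * \<beta>1 = 0" using r8 unfolding a by algebra
    hence b1: "\<beta>1 = 0" using m0 by simp
    have "(2*m) * \<beta>1' = 0" using r38 unfolding a2' a b2 by algebra
    hence b1': "\<beta>1' = 0" using m0 by simp
    have "\<gamma> * \<nu> = 0" using r64 unfolding b1 b2 g0 by algebra
    hence g: "\<gamma> = 0" using nu by simp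
    show ?thesis
    proof (rule fin_sw2[where gN=0])
      show "normal_form TTn' SSn' (lc [(-\<gamma>1, [T], [T]), (-\<gamma>0, [S], [S]), (-\<alpha>3, [S,T], []),
        (-\<alpha>2, [T], [S]), (-\<alpha>2', [S], [T]), (-\<alpha>1', [], [T,S]), (-0, [], [])])"
        unfolding TTn SSn by (rule nf5I[OF nu pd pm refl refl]) (rule TSB, use g0 g1 a2 a2' a d in auto)
    qed (use b1 b1' b2 g g0 g1 a2 a2' a d in simp_all)
  qed
qed

lemma IVbasics:
  assumes nu: "\<nu> = 0" and nn: "n = 0"
  shows "4 * \<mu>^2 = 1" "4 * m^2 = 1" "\<mu> \<noteq> 0" "m \<noteq> 0" "Pt = 2*\<mu>*lam" "Qs = 2*m*l"
    "TTn = TT_quad \<mu>" "SSn = SS_quad m" "TTn' = TT_quad m" "SSn' = SS_quad \<mu>"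
    "pm_half \<mu>" "pm_half m"
proof -
  have mu2: "\<mu>^2 = 1/4" using mu_sq nu .
  have m2: "m^2 = 1/4" using m_sq nn .
  show "4 * \<mu>^2 = 1" using mu2 by (simp add: mult.commute)
  show "4 * m^2 = 1" using m2 by (simp add: mult.commute)
  show "\<mu> \<noteq> 0" using mu2 by auto
  show "m \<noteq> 0" using m2 by auto
  show "Pt = 2*\<mu>*lam" unfolding Pt_def using nu by simp
  show "Qs = 2*m*l" unfolding Qs_def using nn by simp
  show "TTn = TT_quad \<mu>" unfolding TTn_def using nu by simp
  show "SSn = SS_quad m" unfolding SSn_def using nn by simp
  show "TTn' = TT_quad m" unfolding TTn'_def using nn by simp
  show "SSn' = SS_quad \<mu>" unfolding SSn'_def using nu by simp
  show "pm_half \<mu>" using pm_half_sq[OF mu2] .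
  show "pm_half m" using pm_half_sq[OF m2] .
qed

lemma hK3:
  assumes nu: "\<nu> = 0" and nn: "n = 0" and g0: "\<gamma>0 = 0" and g1: "\<gamma>1 = 0"
    and a: "\<alpha>1' = \<mu>" and b: "\<alpha>2 = -\<mu>" and cc: "\<alpha>2' = \<mu>" and d: "\<alpha>3 = -\<mu>"
  shows "\<exists>br'. is_double_bracket br' \<and> isomorphic_dqp br br' \<and>
           normal_form (br' tgen tgen) (br' sgen sgen) (br' tgen sgen)"
proof -
  note B = IVbasics[OF nu nn]
  have "(2*\<mu>) * \<beta>1 = 0" using r64 unfolding a b g0 nu by algebra
  hence b1: "\<beta>1 = 0" using B(3) by simp
  have "(2*\<mu>) * \<beta>1' = 0" using r67 unfolding cc d g0 nu by algebra
  hence b1': "\<beta>1' = 0" using B(3) by simp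
  have "(2*\<mu>) * (\<beta>2 - lam) = 0" using r68 unfolding a cc g1 by algebra
  hence b2: "\<beta>2 = lam" using B(3) by simp
  have "(2*\<mu>) * (\<beta>2' + lam) = 0" using r69 unfolding b d g1 by algebra
  hence b2': "\<beta>2' = - lam" using B(3) by (simp add: add_eq_0_iff2)
  have "(2*\<mu>) * \<gamma> = 0" using r71 unfolding a d b1 b1' by algebra
  hence g: "\<gamma> = 0" using B(3) by simp
  show ?thesis
  proof (rule fin_id2[where gN=0])
    show "normal_form TTn SSn (lc [(\<gamma>0, [T], [T]), (\<gamma>1, [S], [S]), (\<alpha>1', [S,T], []),
      (\<alpha>2, [T], [S]), (\<alpha>2', [S], [T]), (\<alpha>3, [], [T,S]), (0, [], [])])"
      unfolding B(7,8) by (rule nf3I[OF B(12) B(11) refl refl]) (rule TSA, use g0 g1 a b cc d in auto)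
    show "\<beta>2 = \<gamma>1 * Qs + (\<alpha>1' + \<alpha>2') * Pt"
      unfolding b2 g1 a cc B(5) by (simp only: mult_zero_left add_0_left) (use B(1) in algebra)
    show "\<beta>2' = \<gamma>1 * Qs + (\<alpha>2 + \<alpha>3) * Pt"
      unfolding b2' g1 b d B(5) by (simp only: mult_zero_left add_0_left) (use B(1) in algebra)
  qed (use b1 b1' g g0 g1 a b cc d in simp_all)
qed

lemma hK3':
  assumes nu: "\<nu> = 0" and nn: "n = 0" and g0: "\<gamma>0 = 0" and g1: "\<gamma>1 = 0"
    and a: "\<alpha>1' = m" and b: "\<alpha>2 = m" and cc: "\<alpha>2' = -m" and d: "\<alpha>3 = -m"
  shows "\<exists>br'. is_double_bracket br' \<and> isomorphic_dqp br br' \<and>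
           normal_form (br' tgen tgen) (br' sgen sgen) (br' tgen sgen)"
proof -
  note B = IVbasics[OF nu nn]
  have "(2*m) * (\<beta>1 - l) = 0" using r60 unfolding a b g0 by algebra
  hence b1: "\<beta>1 = l" using B(4) by simp
  have "(2*m) * (\<beta>1' + l) = 0" using r63 unfolding cc d g0 by algebra
  hence b1': "\<beta>1' = - l" using B(4) by (simp add: add_eq_0_iff2)
  have "(2*m) * \<beta>2 = 0" using r13 r43 unfolding a cc g1 by algebra
  hence b2: "\<beta>2 = 0" using B(4) by simp
  have "(2*m) * \<beta>2' = 0" using r22 r42 unfolding b d g1 by algebra
  hence b2': "\<beta>2' = 0" using B(4) by simp
  have "(2*m) * \<gamma> = 0" using r70 unfolding a d b2 b2' by algebra
  hence g: "\<gamma> = 0" using B(4) by simp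
  show ?thesis
  proof (rule fin_sw2[where gN=0])
    show "normal_form TTn' SSn' (lc [(-\<gamma>1, [T], [T]), (-\<gamma>0, [S], [S]), (-\<alpha>3, [S,T], []),
      (-\<alpha>2, [T], [S]), (-\<alpha>2', [S], [T]), (-\<alpha>1', [], [T,S]), (-0, [], [])])"
      unfolding B(9,10) by (rule nf3I[OF B(11) B(12) refl refl]) (rule TSA, use g0 g1 a b cc d in auto)
    show "\<beta>1 = \<gamma>0 * Pt + (\<alpha>1' + \<alpha>2) * Qs"
      unfolding b1 g0 a b B(6) by (simp only: mult_zero_left add_0_left) (use B(2) in algebra)
    show "\<beta>1' = \<gamma>0 * Pt + (\<alpha>2' + \<alpha>3) * Qs"
      unfolding b1' g0 cc d B(6) by (simp only: mult_zero_left add_0_left) (use B(2) in algebra)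
  qed (use b2 b2' g g0 g1 a b cc d in simp_all)
qed

lemma hK4:
  assumes nu: "\<nu> = 0" and nn: "n = 0" and g0: "\<gamma>0 = 0" and g1: "\<gamma>1 = 0"
    and pa: "pm_half \<alpha>1'" and d: "\<alpha>3 = \<alpha>1'" and b: "\<alpha>2 = -\<alpha>1'" and cc: "\<alpha>2' = -\<alpha>1'"
  shows "\<exists>br'. is_double_bracket br' \<and> isomorphic_dqp br br' \<and>
           normal_form (br' tgen tgen) (br' sgen sgen) (br' tgen sgen)"
proof -
  note B = IVbasics[OF nu nn]
  have a0: "\<alpha>1' \<noteq> 0" using pa by (auto simp: pm_half_def)
  have "(2*\<alpha>1') * \<beta>1 = 0" using r64 unfolding b g0 nu by algebra
  hence b1: "\<beta>1 = 0" using a0 by simp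
  have "(2*\<alpha>1') * \<beta>1' = 0" using r67 unfolding cc d g0 nu by algebra
  hence b1': "\<beta>1' = 0" using a0 by simp
  have "(2*\<alpha>1') * \<beta>2 = 0" using r13 r43 unfolding cc g1 by algebra
  hence b2: "\<beta>2 = 0" using a0 by simp
  have "(2*\<alpha>1') * \<beta>2' = 0" using r22 r42 unfolding b d g1 by algebra
  hence b2': "\<beta>2' = 0" using a0 by simp
  have "(2*\<alpha>1') * \<gamma> = 0" using r30 r31 unfolding b cc b1 b1' b2 b2' by algebra
  hence g: "\<gamma> = 0" using a0 by simp
  show ?thesis
  proof (rule fin_id2[where gN=0])
    show "normal_form TTn SSn (lc [(\<gamma>0, [T], [T]), (\<gamma>1, [S], [S]), (\<alpha>1', [S,T], []),
      (\<alpha>2, [T], [S]), (\<alpha>2', [S], [T]), (\<alpha>3, [], [T,S]), (0, [], [])])"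
      unfolding B(7,8) by (rule nf4I[OF pa B(12) B(11) refl refl]) (rule TSB, use g0 g1 b cc d in auto)
  qed (use b1 b1' b2 b2' g g0 g1 b cc d in simp_all)
qed

lemma hK2:
  assumes nu: "\<nu> = 0" and nn: "n = 0" and g0: "\<gamma>0 = 0" and g1: "\<gamma>1 = 0"
    and mm: "m = -\<mu>" and pa: "pm_half \<alpha>1'" and d: "\<alpha>3 = \<alpha>1'" and b: "\<alpha>2 = -\<mu>" and cc: "\<alpha>2' = \<mu>"
  shows "\<exists>br'. is_double_bracket br' \<and> isomorphic_dqp br br' \<and>
           normal_form (br' tgen tgen) (br' sgen sgen) (br' tgen sgen)"
proof -
  note B = IVbasics[OF nu nn]
  have e1: "2*\<mu>*\<beta>1 + (\<alpha>1' - \<mu>) * l = 0" using r64 r60 unfolding b g0 nu by algebra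
  have e2: "2*\<mu>*\<beta>1' + (\<mu> + \<alpha>1') * l = 0" using r67 r63 unfolding cc d g0 nu by algebra
  have e3: "2*\<mu>*\<beta>2 - (\<alpha>1' + \<mu>) * lam = 0" using r68 r13 unfolding cc g1 by algebra
  have e4: "2*\<mu>*\<beta>2' - (\<alpha>1' - \<mu>) * lam = 0" using r69 r22 unfolding b d g1 by algebra
  show ?thesis
  proof (rule fin_id2[where gN="\<gamma> - 2*\<alpha>1'*Pt*Qs"])
    show "normal_form TTn SSn (lc [(\<gamma>0, [T], [T]), (\<gamma>1, [S], [S]), (\<alpha>1', [S,T], []),
      (\<alpha>2, [T], [S]), (\<alpha>2', [S], [T]), (\<alpha>3, [], [T,S]), (\<gamma> - 2*\<alpha>1'*Pt*Qs, [], [])])"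
      unfolding B(7,8) unfolding mm by (rule nf2I[OF pa B(11) refl refl]) (rule TS2, use g0 g1 b cc d in auto)
    show "\<beta>1 = \<gamma>0 * Pt + (\<alpha>1' + \<alpha>2) * Qs"
      unfolding g0 b B(6) unfolding mm by (simp only: mult_zero_left add_0_left) (use B(1) e1 in algebra)
    show "\<beta>1' = \<gamma>0 * Pt + (\<alpha>2' + \<alpha>3) * Qs"
      unfolding g0 cc d B(6) unfolding mm by (simp only: mult_zero_left add_0_left) (use B(1) e2 in algebra)
    show "\<beta>2 = \<gamma>1 * Qs + (\<alpha>1' + \<alpha>2') * Pt"
      unfolding g1 cc B(5) by (simp only: mult_zero_left add_0_left) (use B(1) e3 in algebra)
    show "\<beta>2' = \<gamma>1 * Qs + (\<alpha>2 + \<alpha>3) * Pt"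
      unfolding g1 b d B(5) by (simp only: mult_zero_left add_0_left) (use B(1) e4 in algebra)
    show "\<gamma> = \<gamma> - 2*\<alpha>1'*Pt*Qs + \<gamma>0 * Pt^2 + \<gamma>1 * Qs^2 + (\<alpha>1' + \<alpha>2 + \<alpha>2' + \<alpha>3) * Pt * Qs"
      unfolding g0 g1 b cc d by (simp add: algebra_simps)
  qed
qed

lemma hK1:
  assumes nu: "\<nu> = 0" and nn: "n = 0" and mm: "m = \<mu>"
    and a: "\<alpha>1' = \<mu>" and d: "\<alpha>3 = -\<mu>" and cc: "\<alpha>2' = \<alpha>2"
  shows "\<exists>br'. is_double_bracket br' \<and> isomorphic_dqp br br' \<and>
           normal_form (br' tgen tgen) (br' sgen sgen) (br' tgen sgen)"
proof -
  note B = IVbasics[OF nu nn]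
  note c = common
  have "4*\<alpha>2^2 = 4*(1/4 + \<gamma>0*\<gamma>1)" using c(7) by simp
  hence al: "4*\<alpha>2^2 = 1 + 4*\<gamma>0*\<gamma>1" by (simp add: distrib_left)
  have e1: "2*\<mu>*\<beta>1 - \<gamma>0*lam - (\<mu> + \<alpha>2)*l = 0" using r64 r60 unfolding a nu by algebra
  have e2: "2*\<mu>*\<beta>1' - \<gamma>0*lam - (\<alpha>2 - \<mu>)*l = 0" using r67 r63 unfolding cc d nu by algebra
  have e3: "2*\<mu>*\<beta>2 - (\<mu> + \<alpha>2)*lam - \<gamma>1*l = 0" using r68 r56 unfolding a cc nn by algebra
  have e4: "2*\<mu>*\<beta>2' - (\<alpha>2 - \<mu>)*lam - \<gamma>1*l = 0" using r69 r58 unfolding d nn by algebra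
  have b1: "\<beta>1 = \<gamma>0 * Pt + (\<alpha>1' + \<alpha>2) * Qs"
    unfolding B(5,6) unfolding a mm using e1 B(1) by algebra
  have b1': "\<beta>1' = \<gamma>0 * Pt + (\<alpha>2' + \<alpha>3) * Qs"
    unfolding B(5,6) unfolding cc d mm using e2 B(1) by algebra
  have b2: "\<beta>2 = \<gamma>1 * Qs + (\<alpha>1' + \<alpha>2') * Pt"
    unfolding B(5,6) unfolding a cc mm using e3 B(1) by algebra
  have b2': "\<beta>2' = \<gamma>1 * Qs + (\<alpha>2 + \<alpha>3) * Pt"
    unfolding B(5,6) unfolding d mm using e4 B(1) by algebra
  define E where "E = \<gamma>0 * Pt^2 + \<gamma>1 * Qs^2 + 2*\<alpha>2 * Pt * Qs"
  have "4*(\<alpha>2 + \<mu>)*(\<gamma> - E) = 0"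
    using r30 unfolding b1 b2 E_def B(5,6) a cc mm using al B(1) by algebra
  moreover have "4*(\<alpha>2 - \<mu>)*(\<gamma> - E) = 0"
    using r40 unfolding b1' b2' E_def B(5,6) d cc mm using al B(1) by algebra
  ultimately have "8*\<mu>*(\<gamma> - E) = 0" by algebra
  hence g: "\<gamma> = E" using B(3) by simp
  show ?thesis
  proof (rule fin_id2[where gN=0, OF b1 b1' b2 b2'])
    show "\<gamma> = 0 + \<gamma>0 * Pt^2 + \<gamma>1 * Qs^2 + (\<alpha>1' + \<alpha>2 + \<alpha>2' + \<alpha>3) * Pt * Qs"
      unfolding g E_def a cc d by (simp add: algebra_simps)
    show "normal_form TTn SSn (lc [(\<gamma>0, [T], [T]), (\<gamma>1, [S], [S]), (\<alpha>1', [S,T], []),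
      (\<alpha>2, [T], [S]), (\<alpha>2', [S], [T]), (\<alpha>3, [], [T,S]), (0, [], [])])"
      unfolding B(7,8) unfolding mm by (rule nf1I[OF B(11) c(7) refl refl]) (rule TS1, use a cc d in auto)
  qed
qed

lemma caseIV:
  assumes nu: "\<nu> = 0" and nn: "n = 0"
  shows "\<exists>br'. is_double_bracket br' \<and> isomorphic_dqp br br' \<and>
           normal_form (br' tgen tgen) (br' sgen sgen) (br' tgen sgen)"
proof -
  note c = common
  have mu2: "\<mu>^2 = 1/4" using mu_sq nu .
  have m2: "m^2 = 1/4" using m_sq nn .
  have "(\<alpha>2' + m)*(\<alpha>3 + m) = (1/4 + 1 * \<alpha>2' * \<alpha>3 + 1 * \<alpha>2' * m + 1 * \<alpha>3 * m) + (m^2 - 1/4)"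
    by (simp add: algebra_simps power2_eq_square)
  also have "\<dots> = 0" unfolding r45 m2 by simp
  finally have F1: "(\<alpha>2' + m)*(\<alpha>3 + m) = 0" .
  have "(\<alpha>1' - m)*(\<alpha>2 - m) = - ((-1/4) + (-1) * \<alpha>1' * \<alpha>2 + 1 * \<alpha>1' * m + 1 * \<alpha>2 * m) + (m^2 - 1/4)"
    by (simp add: algebra_simps power2_eq_square)
  also have "\<dots> = 0" unfolding r46 m2 by simp
  finally have F2: "(\<alpha>1' - m)*(\<alpha>2 - m) = 0" .
  have "(\<alpha>2 + \<mu>)*(\<alpha>3 + \<mu>) = - ((-1/4) + (-1) * \<alpha>2 * \<alpha>3 + (-1) * \<alpha>2 * \<mu> + (-1) * \<alpha>3 * \<mu>) + (\<mu>^2 - 1/4)"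
    by (simp add: algebra_simps power2_eq_square)
  also have "\<dots> = 0" unfolding r50 mu2 by simp
  finally have F3: "(\<alpha>2 + \<mu>)*(\<alpha>3 + \<mu>) = 0" .
  have "(\<alpha>1' - \<mu>)*(\<alpha>2' - \<mu>) = (1/4 + 1 * \<alpha>1' * \<alpha>2' + (-1) * \<alpha>1' * \<mu> + (-1) * \<alpha>2' * \<mu>) + (\<mu>^2 - 1/4)"
    by (simp add: algebra_simps power2_eq_square)
  also have "\<dots> = 0" unfolding r52 mu2 by simp
  finally have F4: "(\<alpha>1' - \<mu>)*(\<alpha>2' - \<mu>) = 0" .
  show ?thesis
  proof (cases "\<gamma>0 = 0 \<and> \<gamma>1 = 0")
    case False
    hence gg: "\<gamma>0 \<noteq> 0 \<or> \<gamma>1 \<noteq> 0" by simp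
    have k1: "(\<alpha>1' - \<mu>) * \<gamma>0 = 0" "(\<alpha>1' - \<mu>) * \<gamma>1 = 0" using r14 r16 by algebra+
    have k2: "(m - \<alpha>1') * \<gamma>0 = 0" "(m - \<alpha>1') * \<gamma>1 = 0" using r10 r9 by algebra+
    have k3: "(\<alpha>3 + \<mu>) * \<gamma>0 = 0" "(\<alpha>3 + \<mu>) * \<gamma>1 = 0" using r17 r18 by algebra+
    have k4: "(\<alpha>2' - \<alpha>2) * \<gamma>0 = 0" "(\<alpha>2' - \<alpha>2) * \<gamma>1 = 0" using r12 r15 by algebra+
    have a: "\<alpha>1' = \<mu>" using k1 gg by auto
    have mm: "m = \<mu>" using k2 gg a by auto
    have d: "\<alpha>3 = -\<mu>" using k3 gg by (auto simp: add_eq_0_iff2)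
    have cc: "\<alpha>2' = \<alpha>2" using k4 gg by auto
    show ?thesis by (rule hK1[OF nu nn mm a d cc])
  next
    case True
    hence g0: "\<gamma>0 = 0" and g1: "\<gamma>1 = 0" by auto
    have pb: "pm_half \<alpha>2" using pm_half_sq c(7) g0 by simp
    have pc: "pm_half \<alpha>2'" using pm_half_sq c(8) g0 by simp
    have pa: "pm_half \<alpha>1'" using pm_half_sq c(5) by simp
    have pd: "pm_half \<alpha>3" using pm_half_sq c(6) by simp
    note B = IVbasics[OF nu nn]
    from classify[OF B(11) B(12) pa pb pc pd F1 F2 F3 F4] show ?thesis
    proof (elim disjE conjE)
      assume "m = \<mu>" "\<alpha>1' = \<mu>" "\<alpha>3 = -\<mu>" "\<alpha>2 = \<alpha>2'"
      thus ?thesis using hK1[OF nu nn] by simp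
    next
      assume "m = -\<mu>" "\<alpha>1' = \<alpha>3" "\<alpha>2 = -\<mu>" "\<alpha>2' = \<mu>"
      thus ?thesis using hK2[OF nu nn g0 g1 _ pa] by simp
    next
      assume "\<alpha>1' = \<mu>" "\<alpha>2 = -\<mu>" "\<alpha>2' = \<mu>" "\<alpha>3 = -\<mu>"
      thus ?thesis using hK3[OF nu nn g0 g1] by simp
    next
      assume "\<alpha>1' = m" "\<alpha>2 = m" "\<alpha>2' = -m" "\<alpha>3 = -m"
      thus ?thesis using hK3'[OF nu nn g0 g1] by simp
    next
      assume "\<alpha>1' = \<alpha>3" "\<alpha>2 = -\<alpha>1'" "\<alpha>2' = -\<alpha>1'"
      thus ?thesis using hK4[OF nu nn g0 g1 pa] by simp
    qed
  qed
qed

lemma main_result: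
  shows "\<exists>br'. is_double_bracket br' \<and> isomorphic_dqp br br' \<and>
           normal_form (br' tgen tgen) (br' sgen sgen) (br' tgen sgen)"
proof (cases "\<nu> = 0"; cases "n = 0")
  assume "\<nu> = 0" "n = 0" thus ?thesis by (rule caseIV)
next
  assume "\<nu> = 0" "n \<noteq> 0" thus ?thesis by (rule caseII)
next
  assume "\<nu> \<noteq> 0" "n = 0" thus ?thesis by (rule caseIII)
next
  assume "\<nu> \<noteq> 0" "n \<noteq> 0" thus ?thesis by (rule caseI)
qed
end

theorem proposition4p8:
  fixes br :: "'k::field_char_0 nc \<Rightarrow> 'k nc \<Rightarrow> 'k nc2"
    and lam \<mu> \<nu> l m n :: 'k
    and \<alpha>0 \<alpha>0' \<beta>0 \<beta>0' \<gamma>0 \<gamma>1 \<alpha>1 \<alpha>1' \<alpha>2 \<alpha>2' \<alpha>3 \<alpha>3' \<beta>1 \<beta>1' \<beta>2 \<beta>2' \<gamma> :: 'k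
  assumes db: "is_double_bracket br"
    and tt: "br tgen tgen = lc [(lam, [T], []), (-lam, [], [T]),
                                (\<mu>, [T,T], []), (-\<mu>, [], [T,T]),
                                (\<nu>, [T,T], [T]), (-\<nu>, [T], [T,T])]"
    and ss: "br sgen sgen = lc [(l, [S], []), (-l, [], [S]),
                                (m, [S,S], []), (-m, [], [S,S]),
                                (n, [S,S], [S]), (-n, [S], [S,S])]"
    and cond_t: "4 * (\<mu>^2 - lam * \<nu>) = 1"
    and cond_s: "4 * (m^2 - l * n) = 1"
    and ts: "br tgen sgen = lc [(\<alpha>0, [T,T], []), (\<alpha>0', [], [T,T]),
                                (\<beta>0, [S,S], []), (\<beta>0', [], [S,S]),
                                (\<gamma>0, [T], [T]), (\<gamma>1, [S], [S]),
                                (\<alpha>1, [T,S], []), (\<alpha>1', [S,T], []),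
                                (\<alpha>2, [T], [S]), (\<alpha>2', [S], [T]),
                                (\<alpha>3, [], [T,S]), (\<alpha>3', [], [S,T]),
                                (\<beta>1, [T], []), (\<beta>1', [], [T]),
                                (\<beta>2, [S], []), (\<beta>2', [], [S]),
                                (\<gamma>, [], [])]"
    and qp: "quasi_poisson br"
  shows "\<exists>br'. is_double_bracket br' \<and> isomorphic_dqp br br' \<and>
           normal_form (br' tgen tgen) (br' sgen sgen) (br' tgen sgen)"
  by (rule hyps.main_result[OF hyps.intro[OF db tt ss cond_t cond_s ts qp]])

end
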